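(* Assume the standing setup below. Then each of the induced subposets $A\setminus X$ and $C\setminus X$ of $Q$ is of one of the following forms: (i) an antichain, possibly together with a single additional element below all elements of the antichain and/or a single additional element above all elements of the antichain; or (ii) the three-element poset consisting of a two-element chain and one element incomparable to both.
   Context: Standing setup: $\Gamma_n=\{A,B,C\}$ is a set of three pairwise non-isomorphic posets of size $n$, and $Q$ is a witness of $\Gamma_n$ (the set of isomorphism classes of downsets of $Q$ of size $n$ is exactly $\Gamma_n$). $G_n(Q)$ is the exchange graph: vertices are all downsets of $Q$ of size $n$ (as subsets), adjacent when they differ by exactly one element. A special path is a path $v_0,\ldots,v_r$ ($r\ge2$) in $G_n(Q)$ whose first vertex, internal vertices, and last vertex are isomorphic to three distinct members of $\Gamma_n$ respectively (all internal vertices isomorphic to the same member). Fix a special path of minimal length among all special paths in $G_n(Q)$, labelled so that $v_0\cong A$, $v_1,\ldots,v_{r-1}\cong B$, $v_r\cong C$; $A:=v_0$, $C:=v_r$ denote these specific downsets. Assume $Q$ equals the union of the vertices of this path. Let $X=A\cap C$ and $m=|A\setminus X|=|C\setminus X|$. *)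

theory Defs
  imports Main
begin

definition partial_order_on' :: "'a set \<Rightarrow> ('a \<Rightarrow> 'a \<Rightarrow> bool) \<Rightarrow> bool" where
  "partial_order_on' S le \<longleftrightarrow>
     (\<forall>x\<in>S. le x x) \<and>
     (\<forall>x\<in>S. \<forall>y\<in>S. le x y \<and> le y x \<longrightarrow> x = y) \<and>
     (\<forall>x\<in>S. \<forall>y\<in>S. \<forall>z\<in>S. le x y \<and> le y z \<longrightarrow> le x z)"

definition poset_iso :: "'a set \<Rightarrow> ('a \<Rightarrow> 'a \<Rightarrow> bool) \<Rightarrow> 'b set \<Rightarrow> ('b \<Rightarrow> 'b \<Rightarrow> bool) \<Rightarrow> bool" where
  "poset_iso S r T s \<longleftrightarrow>
     (\<exists>f. bij_betw f S T \<and> (\<forall>x\<in>S. \<forall>y\<in>S. r x y \<longleftrightarrow> s (f x) (f y)))"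

definition downset :: "'a set \<Rightarrow> ('a \<Rightarrow> 'a \<Rightarrow> bool) \<Rightarrow> 'a set \<Rightarrow> bool" where
  "downset Q le D \<longleftrightarrow> D \<subseteq> Q \<and> (\<forall>x\<in>D. \<forall>y\<in>Q. le y x \<longrightarrow> y \<in> D)"

definition ndownset :: "'a set \<Rightarrow> ('a \<Rightarrow> 'a \<Rightarrow> bool) \<Rightarrow> nat \<Rightarrow> 'a set \<Rightarrow> bool" where
  "ndownset Q le n D \<longleftrightarrow> downset Q le D \<and> finite D \<and> card D = n"

definition exch_adj :: "'a set \<Rightarrow> 'a set \<Rightarrow> bool" where
  "exch_adj D1 D2 \<longleftrightarrow> card (D1 - D2) = 1 \<and> card (D2 - D1) = 1"

definition witness :: "'a set \<Rightarrow> ('a \<Rightarrow> 'a \<Rightarrow> bool) \<Rightarrow> nat \<Rightarrow> ('b set \<times> ('b \<Rightarrow> 'b \<Rightarrow> bool)) set \<Rightarrow> bool" where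
  "witness Q le n G \<longleftrightarrow>
     (\<forall>D. ndownset Q le n D \<longrightarrow> (\<exists>P\<in>G. poset_iso D le (fst P) (snd P))) \<and>
     (\<forall>P\<in>G. \<exists>D. ndownset Q le n D \<and> poset_iso D le (fst P) (snd P))"

definition exch_path :: "'a set \<Rightarrow> ('a \<Rightarrow> 'a \<Rightarrow> bool) \<Rightarrow> nat \<Rightarrow> 'a set list \<Rightarrow> bool" where
  "exch_path Q le n vs \<longleftrightarrow>
     vs \<noteq> [] \<and> distinct vs \<and> (\<forall>v\<in>set vs. ndownset Q le n v) \<and>
     (\<forall>i. Suc i < length vs \<longrightarrow> exch_adj (vs ! i) (vs ! Suc i))"

definition special_path :: "'a set \<Rightarrow> ('a \<Rightarrow> 'a \<Rightarrow> bool) \<Rightarrow> nat \<Rightarrow> ('b set \<times> ('b \<Rightarrow> 'b \<Rightarrow> bool)) set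
    \<Rightarrow> 'a set list \<Rightarrow> bool" where
  "special_path Q le n G vs \<longleftrightarrow>
     exch_path Q le n vs \<and> length vs \<ge> 3 \<and>
     (\<exists>P1\<in>G. \<exists>P2\<in>G. \<exists>P3\<in>G. P1 \<noteq> P2 \<and> P1 \<noteq> P3 \<and> P2 \<noteq> P3 \<and>
        poset_iso (hd vs) le (fst P1) (snd P1) \<and>
        (\<forall>i. 0 < i \<and> i < length vs - 1 \<longrightarrow> poset_iso (vs ! i) le (fst P2) (snd P2)) \<and>
        poset_iso (last vs) le (fst P3) (snd P3))"

definition lt_of :: "('a \<Rightarrow> 'a \<Rightarrow> bool) \<Rightarrow> 'a \<Rightarrow> 'a \<Rightarrow> bool" where
  "lt_of le x y \<longleftrightarrow> le x y \<and> x \<noteq> y"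

definition incomparable :: "('a \<Rightarrow> 'a \<Rightarrow> bool) \<Rightarrow> 'a \<Rightarrow> 'a \<Rightarrow> bool" where
  "incomparable le x y \<longleftrightarrow> \<not> le x y \<and> \<not> le y x"

definition antichain_with_ends :: "('a \<Rightarrow> 'a \<Rightarrow> bool) \<Rightarrow> 'a set \<Rightarrow> bool" where
  "antichain_with_ends le T \<longleftrightarrow>
     (\<exists>U Bot Top. T = U \<union> Bot \<union> Top \<and>
        U \<inter> Bot = {} \<and> U \<inter> Top = {} \<and> Bot \<inter> Top = {} \<and>
        finite Bot \<and> card Bot \<le> 1 \<and> finite Top \<and> card Top \<le> 1 \<and>
        (\<forall>x\<in>U. \<forall>y\<in>U. x \<noteq> y \<longrightarrow> incomparable le x y) \<and>
        (\<forall>b\<in>Bot. \<forall>u\<in>U. lt_of le b u) \<and>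
        (\<forall>t\<in>Top. \<forall>u\<in>U. lt_of le u t))"

definition chain2_plus_point :: "('a \<Rightarrow> 'a \<Rightarrow> bool) \<Rightarrow> 'a set \<Rightarrow> bool" where
  "chain2_plus_point le T \<longleftrightarrow>
     (\<exists>x y z. T = {x, y, z} \<and> x \<noteq> z \<and> y \<noteq> z \<and> lt_of le x y \<and>
        incomparable le x z \<and> incomparable le y z)"

end

theory Submission
  imports Defs
begin

lemma po_refl: "partial_order_on' Q le \<Longrightarrow> x \<in> Q \<Longrightarrow> le x x"
  unfolding partial_order_on'_def by blast
lemma po_antisym: "partial_order_on' Q le \<Longrightarrow> x \<in> Q \<Longrightarrow> y \<in> Q \<Longrightarrow> le x y \<Longrightarrow> le y x \<Longrightarrow> x = y"
  unfolding partial_order_on'_def by blast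
lemma po_trans: "partial_order_on' Q le \<Longrightarrow> x \<in> Q \<Longrightarrow> y \<in> Q \<Longrightarrow> z \<in> Q \<Longrightarrow> le x y \<Longrightarrow> le y z \<Longrightarrow> le x z"
  unfolding partial_order_on'_def by blast

lemma po_flip: "partial_order_on' Q le \<Longrightarrow> partial_order_on' Q (\<lambda>x y. le y x)"
  unfolding partial_order_on'_def by blast

lemma ex_maximal:
  assumes po: "partial_order_on' Q le" and fin: "finite S" and ne: "S \<noteq> {}" and sub: "S \<subseteq> Q"
  shows "\<exists>x\<in>S. \<forall>y\<in>S. le x y \<longrightarrow> y = x"
  using fin ne sub
proof (induction S rule: finite_ne_induct)
  case (singleton a)
  then show ?case by auto
next
  case (insert a F)
  then obtain x where x: "x \<in> F" "\<forall>y\<in>F. le x y \<longrightarrow> y = x" by auto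
  show ?case
  proof (cases "le x a")
    case True
    have "\<forall>y\<in>insert a F. le a y \<longrightarrow> y = a"
    proof (intro ballI impI)
      fix y assume y: "y \<in> insert a F" "le a y"
      show "y = a"
      proof (cases "y = a")
        case False
        then have yF: "y \<in> F" using y by auto
        have "le x y" using po_trans[OF po, of x a y] True y insert x yF by auto
        then have "y = x" using x yF by auto
        then show ?thesis using po_antisym[OF po, of a x] True y insert x by auto
      qed
    qed
    then show ?thesis by auto
  next
    case False
    then show ?thesis using x by auto
  qed
qed

lemma ex_minimal:
  assumes po: "partial_order_on' Q le" and fin: "finite S" and ne: "S \<noteq> {}" and sub: "S \<subseteq> Q"
  shows "\<exists>x\<in>S. \<forall>y\<in>S. le y x \<longrightarrow> y = x"
  using ex_maximal[OF po_flip[OF po] fin ne sub] by simp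

lemma iso_refl: "poset_iso S r S r"
  unfolding poset_iso_def by (rule exI[of _ id]) auto

lemma iso_sym: assumes "poset_iso S r T s" shows "poset_iso T s S r"
proof -
  obtain f where f: "bij_betw f S T" "\<forall>x\<in>S. \<forall>y\<in>S. r x y = s (f x) (f y)"
    using assms unfolding poset_iso_def by blast
  let ?g = "inv_into S f"
  have g: "bij_betw ?g T S" using f(1) by (rule bij_betw_inv_into)
  have "\<forall>x\<in>T. \<forall>y\<in>T. s x y = r (?g x) (?g y)"
  proof (intro ballI)
    fix x y assume xy: "x \<in> T" "y \<in> T"
    then have "?g x \<in> S" "?g y \<in> S" using g by (auto simp: bij_betw_def)
    moreover have "f (?g x) = x" "f (?g y) = y" using xy f(1)
      by (auto simp: bij_betw_def intro: f_inv_into_f)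
    ultimately show "s x y = r (?g x) (?g y)" using f(2) by metis
  qed
  then show ?thesis unfolding poset_iso_def using g by blast
qed

lemma iso_trans: assumes "poset_iso S r T s" "poset_iso T s U t" shows "poset_iso S r U t"
proof -
  obtain f where f: "bij_betw f S T" "\<forall>x\<in>S. \<forall>y\<in>S. r x y = s (f x) (f y)"
    using assms(1) unfolding poset_iso_def by blast
  obtain g where g: "bij_betw g T U" "\<forall>x\<in>T. \<forall>y\<in>T. s x y = t (g x) (g y)"
    using assms(2) unfolding poset_iso_def by blast
  have "bij_betw (g \<circ> f) S U" using f(1) g(1) by (rule bij_betw_trans)
  moreover have "\<forall>x\<in>S. \<forall>y\<in>S. r x y = t ((g \<circ> f) x) ((g \<circ> f) y)"
    using f g by (auto simp: bij_betw_def)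
  ultimately show ?thesis unfolding poset_iso_def by blast
qed

definition cp :: "'c set \<Rightarrow> ('c \<Rightarrow> 'c \<Rightarrow> bool) \<Rightarrow> nat" where
  "cp S r = card (SIGMA y:S. {x\<in>S. r x y \<and> x \<noteq> y})"

lemma cp_iso: assumes "poset_iso S r T s" shows "cp S r = cp T s"
proof -
  obtain f where f: "bij_betw f S T" "\<forall>x\<in>S. \<forall>y\<in>S. r x y = s (f x) (f y)"
    using assms unfolding poset_iso_def by blast
  let ?h = "\<lambda>(y,x). (f y, f x)"
  have injf: "inj_on f S" and imf: "f ` S = T" using f(1) by (auto simp: bij_betw_def)
  have inj: "inj_on ?h (SIGMA y:S. {x\<in>S. r x y \<and> x \<noteq> y})"
    using injf unfolding inj_on_def by auto
  have img: "?h ` (SIGMA y:S. {x\<in>S. r x y \<and> x \<noteq> y}) = (SIGMA y:T. {x\<in>T. s x y \<and> x \<noteq> y})"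
  proof
    show "?h ` (SIGMA y:S. {x\<in>S. r x y \<and> x \<noteq> y}) \<subseteq> (SIGMA y:T. {x\<in>T. s x y \<and> x \<noteq> y})"
      using f(2) injf imf unfolding inj_on_def by auto
  next
    show "(SIGMA y:T. {x\<in>T. s x y \<and> x \<noteq> y}) \<subseteq> ?h ` (SIGMA y:S. {x\<in>S. r x y \<and> x \<noteq> y})"
    proof
      fix p assume p: "p \<in> (SIGMA y:T. {x\<in>T. s x y \<and> x \<noteq> y})"
      obtain y' x' where p': "p = (y', x')" by (cases p)
      have "y' \<in> T" "x' \<in> T" "s x' y'" "x' \<noteq> y'" using p p' by auto
      then obtain y x where "y \<in> S" "x \<in> S" "y' = f y" "x' = f x" using imf by blast
      then show "p \<in> ?h ` (SIGMA y:S. {x\<in>S. r x y \<and> x \<noteq> y})"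
        using f(2) p' \<open>s x' y'\<close> \<open>x' \<noteq> y'\<close> by (auto intro!: image_eqI[of _ _ "(y, x)"])
    qed
  qed
  show ?thesis unfolding cp_def using card_image[OF inj] img by simp
qed

definition dg :: "'a set \<Rightarrow> ('a \<Rightarrow> 'a \<Rightarrow> bool) \<Rightarrow> 'a \<Rightarrow> nat" where
  "dg Q le y = card {x\<in>Q. le x y \<and> x \<noteq> y}"

lemma cp_downset: assumes "downset Q le Z" "finite Q" shows "cp Z le = (\<Sum>y\<in>Z. dg Q le y)"
proof -
  have "(SIGMA y:Z. {x\<in>Z. le x y \<and> x \<noteq> y}) = (SIGMA y:Z. {x\<in>Q. le x y \<and> x \<noteq> y})"
    using assms(1) unfolding downset_def by auto
  moreover have "finite Z" using assms finite_subset unfolding downset_def by blast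
  ultimately show ?thesis unfolding cp_def dg_def using assms(2) by simp
qed

lemma dg_strict:
  assumes po: "partial_order_on' Q le" and fin: "finite Q" and "x \<in> Q" "y \<in> Q" "le x y" "x \<noteq> y"
  shows "dg Q le x < dg Q le y"
proof -
  have "{z\<in>Q. le z x \<and> z \<noteq> x} \<subset> {z\<in>Q. le z y \<and> z \<noteq> y}"
  proof
    show "{z\<in>Q. le z x \<and> z \<noteq> x} \<subseteq> {z\<in>Q. le z y \<and> z \<noteq> y}"
      using assms po_trans[OF po] po_antisym[OF po] by blast
    show "{z\<in>Q. le z x \<and> z \<noteq> x} \<noteq> {z\<in>Q. le z y \<and> z \<noteq> y}" using assms by blast
  qed
  then show ?thesis unfolding dg_def by (rule psubset_card_mono[rotated]) (use fin in auto)
qed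

lemma downset_Int: "downset Q le A \<Longrightarrow> downset Q le B \<Longrightarrow> downset Q le (A \<inter> B)"
  unfolding downset_def by blast
lemma downset_Un: "downset Q le A \<Longrightarrow> downset Q le B \<Longrightarrow> downset Q le (A \<union> B)"
  unfolding downset_def by blast

lemma nd_finite: "ndownset Q le n D \<Longrightarrow> finite D"
  unfolding ndownset_def by blast
lemma nd_card: "ndownset Q le n D \<Longrightarrow> card D = n"
  unfolding ndownset_def by blast
lemma nd_down: "ndownset Q le n D \<Longrightarrow> downset Q le D"
  unfolding ndownset_def by blast
lemma nd_sub: "ndownset Q le n D \<Longrightarrow> D \<subseteq> Q"
  unfolding ndownset_def downset_def by blast

lemma downset_between:
  assumes po: "partial_order_on' Q le" and fin: "finite Q"
    and L: "downset Q le L" and U: "downset Q le U" and LU: "L \<subseteq> U"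
  shows "card L \<le> k \<Longrightarrow> k \<le> card U \<Longrightarrow> \<exists>W. downset Q le W \<and> L \<subseteq> W \<and> W \<subseteq> U \<and> card W = k"
proof (induction k)
  case 0
  have "finite L" using L fin finite_subset unfolding downset_def by blast
  then have "L = {}" using 0 by simp
  then show ?case using L by (intro exI[of _ "{}"]) (auto simp: downset_def)
next
  case (Suc k)
  show ?case
  proof (cases "card L = Suc k")
    case True
    then show ?thesis using L LU by blast
  next
    case False
    then obtain W where W: "downset Q le W" "L \<subseteq> W" "W \<subseteq> U" "card W = k"
      using Suc by auto
    have finU: "finite U" using U fin finite_subset unfolding downset_def by blast
    have finW: "finite W" using W(3) finU finite_subset by blast
    have "U - W \<noteq> {}"
    proof
      assume "U - W = {}"
      then have "U \<subseteq> W" by blast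
      then have "card U \<le> card W" using card_mono[OF finW] by blast
      then show False using W(4) Suc.prems(2) by simp
    qed
    moreover have "U - W \<subseteq> Q" using U unfolding downset_def by blast
    ultimately obtain y where y: "y \<in> U - W" "\<forall>z\<in>U - W. le z y \<longrightarrow> z = y"
      using ex_minimal[OF po, of "U - W"] finU by blast
    have "downset Q le (insert y W)"
      unfolding downset_def
    proof (intro conjI ballI impI)
      show "insert y W \<subseteq> Q" using W y U unfolding downset_def by blast
    next
      fix w u assume wu: "w \<in> insert y W" "u \<in> Q" "le u w"
      show "u \<in> insert y W"
      proof (cases "w = y")
        case True
        then have "u \<in> U" using wu y U unfolding downset_def by blast
        then show ?thesis using y wu True by blast
      next
        case False
        then show ?thesis using wu W unfolding downset_def by blast
      qed
    qed
    moreover have "card (insert y W) = Suc k"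
      using W(4) y(1) finW by simp
    ultimately show ?thesis using W y by blast
  qed
qed

lemma exch_step:
  assumes po: "partial_order_on' Q le" and fin: "finite Q"
    and D: "downset Q le D" and T: "downset Q le T" and cd: "card D = card T" and ne: "D \<noteq> T"
  shows "\<exists>x y. x \<in> D - T \<and> y \<in> T - D \<and> downset Q le (D - {x} \<union> {y})"
proof -
  have finD: "finite D" and finT: "finite T" using D T fin finite_subset unfolding downset_def by blast+
  have DT: "D - T \<noteq> {}"
  proof
    assume "D - T = {}"
    then have "D \<subseteq> T" by blast
    then show False using card_subset_eq[OF finT _ cd] ne by blast
  qed
  have TD: "T - D \<noteq> {}"
  proof
    assume "T - D = {}"
    then have "T \<subseteq> D" by blast
    then show False using card_subset_eq[OF finD _ cd[symmetric]] ne by blast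
  qed
  obtain x where x: "x \<in> D - T" "\<forall>z\<in>D - T. le x z \<longrightarrow> z = x"
    using ex_maximal[OF po, of "D - T"] finD DT D unfolding downset_def by blast
  obtain y where y: "y \<in> T - D" "\<forall>z\<in>T - D. le z y \<longrightarrow> z = y"
    using ex_minimal[OF po, of "T - D"] finT TD T unfolding downset_def by blast
  have "downset Q le (D - {x} \<union> {y})"
    unfolding downset_def
  proof (intro conjI ballI impI)
    show "D - {x} \<union> {y} \<subseteq> Q" using D T y unfolding downset_def by blast
  next
    fix w u assume wu: "w \<in> D - {x} \<union> {y}" "u \<in> Q" "le u w"
    show "u \<in> D - {x} \<union> {y}"
    proof (cases "w = y")
      case True
      then have "u \<in> T" using wu y T unfolding downset_def by blast
      then show ?thesis using x y wu True by blast
    next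
      case False
      then have w: "w \<in> D" "w \<noteq> x" using wu by auto
      then have uD: "u \<in> D" using wu D unfolding downset_def by blast
      have "u \<noteq> x"
      proof
        assume ux: "u = x"
        show False
        proof (cases "w \<in> T")
          case True
          then have "x \<in> T" using wu ux T unfolding downset_def by blast
          then show False using x by blast
        next
          case False
          then show False using x w wu ux by blast
        qed
      qed
      then show ?thesis using uD by blast
    qed
  qed
  then show ?thesis using x y by blast
qed

lemma card_swap: "finite D \<Longrightarrow> x \<in> D \<Longrightarrow> y \<notin> D \<Longrightarrow> card (D - {x} \<union> {y}) = card D"
  using card_Suc_Diff1[of D x] by simp

lemma exch_adj_swap:
  assumes "x \<in> D" "y \<notin> D"
  shows "exch_adj D (D - {x} \<union> {y})" "exch_adj (D - {x} \<union> {y}) D"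
proof -
  have "D - (D - {x} \<union> {y}) = {x}" "(D - {x} \<union> {y}) - D = {y}" using assms by auto
  then show "exch_adj D (D - {x} \<union> {y})" "exch_adj (D - {x} \<union> {y}) D"
    unfolding exch_adj_def by simp_all
qed

lemma exch_adj_sym: "exch_adj D E \<Longrightarrow> exch_adj E D"
  unfolding exch_adj_def by simp

lemma exch_adj_decomp:
  assumes "exch_adj D E"
  shows "\<exists>x y. D - E = {x} \<and> E - D = {y}"
  using assms unfolding exch_adj_def by (metis One_nat_def card_1_singleton_iff)

lemma exch_path_single: "ndownset Q le n D \<Longrightarrow> exch_path Q le n [D]"
  unfolding exch_path_def by simp

lemma exch_path_Cons:
  assumes "exch_path Q le n ws" "ndownset Q le n D" "D \<notin> set ws" "exch_adj D (hd ws)"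
  shows "exch_path Q le n (D # ws)"
  unfolding exch_path_def
proof (intro conjI allI impI)
  have ne: "ws \<noteq> []" using assms(1) unfolding exch_path_def by blast
  show "D # ws \<noteq> []" by simp
  show "distinct (D # ws)" using assms(1,3) unfolding exch_path_def by simp
  show "\<forall>v\<in>set (D # ws). ndownset Q le n v" using assms(1,2) unfolding exch_path_def by simp
  fix i assume i: "Suc i < length (D # ws)"
  show "exch_adj ((D # ws) ! i) ((D # ws) ! Suc i)"
  proof (cases i)
    case 0
    then show ?thesis using assms(4) ne by (simp add: hd_conv_nth)
  next
    case (Suc j)
    then show ?thesis using assms(1) i unfolding exch_path_def by simp
  qed
qed

lemma path_through:
  assumes po: "partial_order_on' Q le" and fin: "finite Q"
  shows "ndownset Q le n D \<Longrightarrow> ndownset Q le n E \<Longrightarrow> ndownset Q le n Z \<Longrightarrow> D \<inter> E \<subseteq> Z \<Longrightarrow>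
    Z \<subseteq> D \<union> E \<Longrightarrow> card (D - E) = k \<Longrightarrow>
    \<exists>ws. exch_path Q le n ws \<and> hd ws = D \<and> last ws = E \<and> Z \<in> set ws \<and> length ws = Suc k \<and>
       (\<forall>W\<in>set ws. D \<inter> E \<subseteq> W \<and> W \<subseteq> D \<union> E \<and> card (W - E) \<le> k)"
proof (induction k arbitrary: D Z)
  case 0
  have "D - E = {}" using 0 nd_finite[of Q le n D] by simp
  then have "D \<subseteq> E" by blast
  moreover have "card D = card E" using nd_card[OF "0.prems"(1)] nd_card[OF "0.prems"(2)] by simp
  ultimately have "D = E" using card_subset_eq[OF nd_finite[OF "0.prems"(2)]] by blast
  then have "Z = D" using 0 by blast
  then show ?case using 0 \<open>D = E\<close> exch_path_single[OF "0.prems"(1)]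
    by (intro exI[of _ "[D]"]) auto
next
  case (Suc k)
  have DE: "D \<noteq> E"
  proof
    assume "D = E" then have "card (D - E) = 0" by simp
    then show False using Suc.prems(6) by simp
  qed
  define T where "T = (if D = Z then E else Z)"
  have TD: "T \<noteq> D" using DE unfolding T_def by (cases "D = Z") auto
  have ndT: "ndownset Q le n T" using Suc.prems(2,3) unfolding T_def by simp
  have cDT: "card D = card T" using nd_card[OF Suc.prems(1)] nd_card[OF ndT] by simp
  obtain x y where xy: "x \<in> D - T" "y \<in> T - D" "downset Q le (D - {x} \<union> {y})"
    using exch_step[OF po fin nd_down[OF Suc.prems(1)] nd_down[OF ndT] cDT TD[symmetric]] by blast
  define D' where "D' = D - {x} \<union> {y}"
  have finD: "finite D" using nd_finite Suc.prems(1) by blast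
  have ndD': "ndownset Q le n D'"
  proof -
    have "card (D - {x} \<union> {y}) = n" using xy finD nd_card[OF Suc.prems(1)] card_swap[of D x y] by simp
    then show ?thesis unfolding ndownset_def D'_def using xy(3) finD by simp
  qed
  have xE: "x \<notin> E"
  proof (cases "D = Z")
    case True then show ?thesis using xy(1) unfolding T_def by simp
  next
    case False then have "x \<notin> Z" using xy(1) unfolding T_def by simp
    then show ?thesis using xy(1) Suc.prems(4) by blast
  qed
  have yE: "y \<in> E"
  proof (cases "D = Z")
    case True then show ?thesis using xy(2) unfolding T_def by simp
  next
    case False then have "y \<in> Z" using xy(2) unfolding T_def by simp
    then show ?thesis using xy(2) Suc.prems(5) by blast
  qed
  have "D' - E = (D - E) - {x}" unfolding D'_def using yE by blast
  then have cD': "card (D' - E) = k" using Suc.prems(6) xy xE finD by (simp add: card_Diff_singleton)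
  define Z' where "Z' = (if D = Z then D' else Z)"
  have ndZ': "ndownset Q le n Z'" unfolding Z'_def using ndD' Suc.prems(3) by simp
  have Z'12: "D' \<inter> E \<subseteq> Z' \<and> Z' \<subseteq> D' \<union> E"
  proof (cases "D = Z")
    case True then show ?thesis unfolding Z'_def by simp
  next
    case False
    then have "x \<notin> Z" "y \<in> Z" using xy(1,2) unfolding T_def by simp_all
    have "D' \<inter> E \<subseteq> Z" unfolding D'_def using \<open>y \<in> Z\<close> Suc.prems(4) by blast
    moreover have "Z \<subseteq> D' \<union> E" unfolding D'_def using \<open>x \<notin> Z\<close> Suc.prems(5) by blast
    ultimately show ?thesis unfolding Z'_def using False by simp
  qed
  then have Z'1: "D' \<inter> E \<subseteq> Z'" and Z'2: "Z' \<subseteq> D' \<union> E" by simp_all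
  obtain ws where ws: "exch_path Q le n ws" "hd ws = D'" "last ws = E" "Z' \<in> set ws" "length ws = Suc k"
    "\<forall>W\<in>set ws. D' \<inter> E \<subseteq> W \<and> W \<subseteq> D' \<union> E \<and> card (W - E) \<le> k"
    using Suc.IH[OF ndD' Suc.prems(2) ndZ' Z'1 Z'2 cD'] by blast
  have ne: "ws \<noteq> []" using ws(5) by auto
  have Dnot: "D \<notin> set ws"
  proof
    assume "D \<in> set ws"
    then have "card (D - E) \<le> k" using ws(6) by blast
    then show False using Suc.prems(6) by simp
  qed
  have "x \<in> D" "y \<notin> D" using xy(1,2) by simp_all
  then have "exch_adj D D'" unfolding D'_def by (rule exch_adj_swap(1))
  then have adj: "exch_adj D (hd ws)" using ws(2) by simp
  have r1: "exch_path Q le n (D # ws)" by (rule exch_path_Cons[OF ws(1) Suc.prems(1) Dnot adj])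
  have r2: "Z \<in> set (D # ws)"
  proof (cases "D = Z")
    case True then show ?thesis by simp
  next
    case False then show ?thesis using ws(4) unfolding Z'_def by simp
  qed
  have r3: "\<forall>W\<in>set (D # ws). D \<inter> E \<subseteq> W \<and> W \<subseteq> D \<union> E \<and> card (W - E) \<le> Suc k"
  proof
    fix W assume "W \<in> set (D # ws)"
    then consider "W = D" | "W \<in> set ws" by auto
    then show "D \<inter> E \<subseteq> W \<and> W \<subseteq> D \<union> E \<and> card (W - E) \<le> Suc k"
    proof cases
      case 1
      then show ?thesis using Suc.prems(6) by auto
    next
      case 2
      then have "D' \<inter> E \<subseteq> W" "W \<subseteq> D' \<union> E" "card (W - E) \<le> k" using ws(6) by auto
      moreover have "D \<inter> E \<subseteq> D' \<inter> E" "D' \<union> E \<subseteq> D \<union> E" unfolding D'_def using xE yE by blast+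
      ultimately show ?thesis by (meson le_Suc_eq subset_trans)
    qed
  qed
  have r4: "hd (D # ws) = D" by simp
  have r5: "last (D # ws) = E" using ws(3) ne by simp
  have r6: "length (D # ws) = Suc (Suc k)" using ws(5) by simp
  show ?case by (rule exI[of _ "D # ws"], intro conjI) (rule r1 r2 r3 r4 r5 r6)+
qed

definition tpf :: "('b set \<times> ('b \<Rightarrow> 'b \<Rightarrow> bool)) set \<Rightarrow> ('a \<Rightarrow> 'a \<Rightarrow> bool) \<Rightarrow> 'a set
    \<Rightarrow> ('b set \<times> ('b \<Rightarrow> 'b \<Rightarrow> bool))" where
  "tpf G le D = (THE P. P \<in> G \<and> poset_iso D le (fst P) (snd P))"

definition IMf :: "'a set \<Rightarrow> ('a \<Rightarrow> 'a \<Rightarrow> bool) \<Rightarrow> nat \<Rightarrow> 'a set \<Rightarrow> 'a set \<Rightarrow> 'a set \<Rightarrow> bool" where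
  "IMf Q le n A C Z \<longleftrightarrow> ndownset Q le n Z \<and> A \<inter> C \<subseteq> Z \<and> Z \<subseteq> A \<union> C \<and> Z \<noteq> A \<and> Z \<noteq> C"

lemma IMf_sym: "IMf Q le n A C Z = IMf Q le n C A Z"
  unfolding IMf_def by blast

lemma three_elem: "x \<in> {a,b,c} \<Longrightarrow> y \<in> {a,b,c} \<Longrightarrow> z \<in> {a,b,c} \<Longrightarrow> w \<in> {a,b,c} \<Longrightarrow>
  x \<noteq> y \<Longrightarrow> y \<noteq> z \<Longrightarrow> x \<noteq> z \<Longrightarrow> w \<noteq> y \<Longrightarrow> w = x \<or> w = z"
  by auto

lemma card_diff_tri: "finite D \<Longrightarrow> finite E \<Longrightarrow> card (D - F) \<le> card (D - E) + card (E - F)"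
proof -
  assume f: "finite D" "finite E"
  have "D - F \<subseteq> (D - E) \<union> (E - F)" by blast
  then have "card (D - F) \<le> card ((D - E) \<union> (E - F))" using f by (intro card_mono) auto
  also have "\<dots> \<le> card (D - E) + card (E - F)" by (rule card_Un_le)
  finally show ?thesis .
qed

locale msp =
  fixes Q :: "'a set" and le :: "'a \<Rightarrow> 'a \<Rightarrow> bool" and n :: nat
    and SA SB SC :: "'b set" and rA rB rC :: "'b \<Rightarrow> 'b \<Rightarrow> bool"
    and G :: "('b set \<times> ('b \<Rightarrow> 'b \<Rightarrow> bool)) set" and vs :: "'a set list"
  assumes posQ: "partial_order_on' Q le"
    and nAB: "\<not> poset_iso SA rA SB rB" and nAC: "\<not> poset_iso SA rA SC rC"
    and nBC: "\<not> poset_iso SB rB SC rC"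
    and G_def: "G = {(SA, rA), (SB, rB), (SC, rC)}"
    and wit: "witness Q le n G"
    and spec: "special_path Q le n G vs"
    and minimal: "\<forall>ws. special_path Q le n G ws \<longrightarrow> length vs \<le> length ws"
    and isoA: "poset_iso (hd vs) le SA rA"
    and isoB: "\<forall>i. 0 < i \<and> i < length vs - 1 \<longrightarrow> poset_iso (vs ! i) le SB rB"
    and isoC: "poset_iso (last vs) le SC rC"
    and finQ: "finite Q"
begin

abbreviation nd where "nd \<equiv> ndownset Q le n"
abbreviation tp where "tp \<equiv> tpf G le"

lemma nBA: "\<not> poset_iso SB rB SA rA" using nAB iso_sym by blast
lemma nCA: "\<not> poset_iso SC rC SA rA" using nAC iso_sym by blast
lemma nCB: "\<not> poset_iso SC rC SB rB" using nBC iso_sym by blast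

lemma tAB: "(SA, rA) \<noteq> (SB, rB)" using nAB iso_refl by fastforce
lemma tAC: "(SA, rA) \<noteq> (SC, rC)" using nAC iso_refl by fastforce
lemma tBC: "(SB, rB) \<noteq> (SC, rC)" using nBC iso_refl by fastforce

lemma G_uniq:
  assumes "P \<in> G" "P' \<in> G" "poset_iso D le (fst P) (snd P)" "poset_iso D le (fst P') (snd P')"
  shows "P = P'"
proof -
  have iso: "poset_iso (fst P) (snd P) (fst P') (snd P')"
    using iso_trans[OF iso_sym[OF assms(3)] assms(4)] .
  show ?thesis
  proof (rule ccontr)
    assume ne: "P \<noteq> P'"
    have "P \<in> {(SA, rA), (SB, rB), (SC, rC)}" "P' \<in> {(SA, rA), (SB, rB), (SC, rC)}"
      using assms(1,2) G_def by auto
    then show False using ne iso nAB nAC nBC nBA nCA nCB by auto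
  qed
qed

lemma tp_prop:
  assumes "nd D" shows "tp D \<in> G \<and> poset_iso D le (fst (tp D)) (snd (tp D))"
proof -
  obtain P where P: "P \<in> G" "poset_iso D le (fst P) (snd P)"
    using wit assms unfolding witness_def by blast
  have "tp D = P" unfolding tpf_def
  proof (rule the_equality)
    show "P \<in> G \<and> poset_iso D le (fst P) (snd P)" using P by blast
    fix P' assume "P' \<in> G \<and> poset_iso D le (fst P') (snd P')"
    then show "P' = P" using G_uniq[of P' P D] P by blast
  qed
  then show ?thesis using P by simp
qed

lemma tp_eq:
  assumes "nd D" "P \<in> G" "poset_iso D le (fst P) (snd P)" shows "tp D = P"
  using G_uniq[OF _ assms(2) _ assms(3)] tp_prop[OF assms(1)] by blast

lemma tp_in: "nd D \<Longrightarrow> tp D \<in> {(SA, rA), (SB, rB), (SC, rC)}"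
  using tp_prop G_def by blast

lemma vs_path: "exch_path Q le n vs" and vs_len: "3 \<le> length vs"
  using spec unfolding special_path_def by blast+

lemma vs_ne: "vs \<noteq> []" using vs_len by auto

lemma vs_nd: "i < length vs \<Longrightarrow> nd (vs ! i)"
  using vs_path unfolding exch_path_def by auto

lemma vs_adj: "Suc i < length vs \<Longrightarrow> exch_adj (vs ! i) (vs ! Suc i)"
  using vs_path unfolding exch_path_def by auto

lemma nd_hd: "nd (hd vs)" using vs_nd[of 0] vs_ne by (simp add: hd_conv_nth)
lemma nd_last: "nd (last vs)" using vs_nd[of "length vs - 1"] vs_ne by (simp add: last_conv_nth)

lemma tpA: "tp (hd vs) = (SA, rA)" using tp_eq[OF nd_hd _ ] isoA G_def by simp
lemma tpC: "tp (last vs) = (SC, rC)" using tp_eq[OF nd_last _ ] isoC G_def by simp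
lemma tpB: "0 < i \<Longrightarrow> i < length vs - 1 \<Longrightarrow> tp (vs ! i) = (SB, rB)"
  using tp_eq[OF vs_nd _ ] isoB G_def by simp

lemma dist_vs: "i \<le> j \<Longrightarrow> j < length vs \<Longrightarrow> card (vs ! i - vs ! j) \<le> j - i"
proof (induction j)
  case 0
  then show ?case by simp
next
  case (Suc j)
  show ?case
  proof (cases "i = Suc j")
    case True
    then show ?thesis by simp
  next
    case False
    then have ij: "i \<le> j" using Suc.prems by simp
    have "card (vs ! i - vs ! Suc j) \<le> card (vs ! i - vs ! j) + card (vs ! j - vs ! Suc j)"
      using card_diff_tri nd_finite vs_nd Suc.prems by (metis Suc_lessD le_less_trans)
    also have "card (vs ! j - vs ! Suc j) = 1" using vs_adj[of j] Suc.prems unfolding exch_adj_def by simp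
    also have "card (vs ! i - vs ! j) \<le> j - i" using Suc.IH ij Suc.prems by simp
    finally show ?thesis using ij by simp
  qed
qed

lemma seg_special:
  assumes ws: "exch_path Q le n ws" and ij: "i < j" and jl: "j < l" and l: "l < length ws"
    and d1: "tp (ws!i) \<noteq> tp (ws!j)" and d2: "tp (ws!j) \<noteq> tp (ws!l)" and d3: "tp (ws!i) \<noteq> tp (ws!l)"
    and same: "\<forall>k. i < k \<and> k < l \<longrightarrow> tp (ws!k) = tp (ws!j)"
  shows "special_path Q le n G (take (Suc (l - i)) (drop i ws))"
proof -
  define seg where "seg = take (Suc (l - i)) (drop i ws)"
  have len: "length seg = Suc (l - i)" unfolding seg_def using l ij jl by simp
  have nth: "\<And>k. k < length seg \<Longrightarrow> seg ! k = ws ! (i + k)" unfolding seg_def using l ij jl by simp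
  have wsnd: "\<And>k. k < length ws \<Longrightarrow> nd (ws ! k)" using ws unfolding exch_path_def by auto
  have "exch_path Q le n seg" unfolding exch_path_def
  proof (intro conjI allI impI ballI)
    show "seg \<noteq> []" using len by auto
    show "distinct seg" unfolding seg_def using ws unfolding exch_path_def by simp
    fix v assume "v \<in> set seg"
    then have "v \<in> set ws" unfolding seg_def by (meson in_set_dropD in_set_takeD)
    then show "nd v" using ws unfolding exch_path_def by blast
  next
    fix k assume k: "Suc k < length seg"
    then have "Suc (i + k) < length ws" using len l by simp
    then have "exch_adj (ws ! (i + k)) (ws ! Suc (i + k))" using ws unfolding exch_path_def by blast
    then show "exch_adj (seg ! k) (seg ! Suc k)" using nth k by simp
  qed
  moreover have "length seg \<ge> 3" using len ij jl by simp
  moreover have segne: "seg \<noteq> []" using len by auto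
  have hd: "hd seg = ws ! i" using nth[of 0] len hd_conv_nth[OF segne] by simp
  have lst: "last seg = ws ! l" using nth[of "l - i"] len ij jl last_conv_nth[OF segne] by simp
  have iln: "i < length ws" "j < length ws" using ij jl l by simp_all
  have i1: "poset_iso (hd seg) le (fst (tp (ws!i))) (snd (tp (ws!i)))"
    using hd tp_prop[OF wsnd[OF iln(1)]] by simp
  have i3: "poset_iso (last seg) le (fst (tp (ws!l))) (snd (tp (ws!l)))"
    using lst tp_prop[OF wsnd[OF l]] by simp
  have i2: "\<forall>k. 0 < k \<and> k < length seg - 1 \<longrightarrow> poset_iso (seg ! k) le (fst (tp (ws!j))) (snd (tp (ws!j)))"
  proof (intro allI impI)
    fix k assume k: "0 < k \<and> k < length seg - 1"
    then have "i < i + k" "i + k < l" using len by auto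
    then have e1: "tp (ws ! (i + k)) = tp (ws ! j)" using same by blast
    have "k < length seg" using k by linarith
    then have e2: "seg ! k = ws ! (i + k)" by (rule nth)
    have "i + k < length ws" using \<open>i + k < l\<close> l by simp
    then have "poset_iso (ws ! (i + k)) le (fst (tp (ws ! (i + k)))) (snd (tp (ws ! (i + k))))"
      using tp_prop[OF wsnd] by blast
    then show "poset_iso (seg ! k) le (fst (tp (ws!j))) (snd (tp (ws!j)))" using e1 e2 by simp
  qed
  have g: "tp (ws!i) \<in> G" "tp (ws!j) \<in> G" "tp (ws!l) \<in> G"
    using tp_prop[OF wsnd[OF iln(1)]] tp_prop[OF wsnd[OF iln(2)]] tp_prop[OF wsnd[OF l]] by simp_all
  ultimately show ?thesis unfolding special_path_def seg_def[symmetric]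
    using d1 d2 d3 i1 i2 i3 g by blast
qed

lemma no_three_aux:
  "l - i = d \<Longrightarrow> exch_path Q le n ws \<Longrightarrow> length ws < length vs \<Longrightarrow> i < j \<Longrightarrow> j < l \<Longrightarrow> l < length ws \<Longrightarrow>
    tp (ws!i) \<noteq> tp (ws!j) \<Longrightarrow> tp (ws!j) \<noteq> tp (ws!l) \<Longrightarrow> tp (ws!i) \<noteq> tp (ws!l) \<Longrightarrow> False"
proof (induction d arbitrary: i j l rule: less_induct)
  case (less d)
  note h = less.prems
  have wsnd: "\<And>k. k < length ws \<Longrightarrow> nd (ws ! k)" using h(2) unfolding exch_path_def by auto
  show False
  proof (cases "\<forall>k. i < k \<and> k < l \<longrightarrow> tp (ws!k) = tp (ws!j)")
    case True
    have "special_path Q le n G (take (Suc (l - i)) (drop i ws))"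
      using seg_special[OF h(2) h(4) h(5) h(6) h(7) h(8) h(9) True] .
    then have "length vs \<le> length (take (Suc (l - i)) (drop i ws))" using minimal by blast
    then show False using h(3,4,5,6) by simp
  next
    case False
    then obtain k where k: "i < k" "k < l" "tp (ws!k) \<noteq> tp (ws!j)" by blast
    have "tp (ws!k) = tp (ws!i) \<or> tp (ws!k) = tp (ws!l)"
      using three_elem[OF tp_in tp_in tp_in tp_in, of "ws!i" "ws!j" "ws!l" "ws!k"]
        wsnd h k by (meson less_trans)
    moreover have "k \<noteq> j" using k by blast
    ultimately consider "tp (ws!k) = tp (ws!i)" "k < j" | "tp (ws!k) = tp (ws!i)" "j < k"
      | "tp (ws!k) = tp (ws!l)" "k < j" | "tp (ws!k) = tp (ws!l)" "j < k" by linarith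
    then show False
    proof cases
      case 1
      have lt: "l - k < d" using h(1,4,5) k by simp
      have d3: "tp (ws!k) \<noteq> tp (ws!l)" using 1 h(9) by simp
      show False by (rule less.IH[where y="l - k" and i=k and j=j and l=l, OF lt refl h(2,3) 1(2) h(5,6) k(3) h(8) d3])
    next
      case 2
      have lt: "l - j < d" using h(1,4,5) k by simp
      have d1: "tp (ws!j) \<noteq> tp (ws!k)" using k(3) by simp
      have d2: "tp (ws!k) \<noteq> tp (ws!l)" using 2 h(9) by simp
      show False by (rule less.IH[where y="l - j" and i=j and j=k and l=l, OF lt refl h(2,3) 2(2) k(2) h(6) d1 d2 h(8)])
    next
      case 3
      have lt: "j - i < d" using h(1,4,5) k by simp
      have d1: "tp (ws!i) \<noteq> tp (ws!k)" using 3 h(9) by simp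
      show False by (rule less.IH[where y="j - i" and i=i and j=k and l=j, OF lt refl h(2,3) k(1) 3(2) _ d1 k(3) h(7)]) (use h(4,5,6) in simp)
    next
      case 4
      have lt: "k - i < d" using h(1,4,5) k by simp
      have d2: "tp (ws!j) \<noteq> tp (ws!k)" using k(3) by simp
      have d3: "tp (ws!i) \<noteq> tp (ws!k)" using 4 h(9) by simp
      show False by (rule less.IH[where y="k - i" and i=i and j=j and l=k, OF lt refl h(2,3) h(4) 4(2) _ h(7) d2 d3]) (use k h(6) in simp)
    qed
  qed
qed

lemma no_three:
  "exch_path Q le n ws \<Longrightarrow> length ws < length vs \<Longrightarrow> i < j \<Longrightarrow> j < l \<Longrightarrow> l < length ws \<Longrightarrow>
    tp (ws!i) \<noteq> tp (ws!j) \<Longrightarrow> tp (ws!j) \<noteq> tp (ws!l) \<Longrightarrow> tp (ws!i) \<noteq> tp (ws!l) \<Longrightarrow> False"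
  using no_three_aux[OF refl] by blast

end

context msp
begin

lemma two_types:
  assumes ndD: "nd D" and ndE: "nd E" and ndZ: "nd Z" and s1: "D \<inter> E \<subseteq> Z" and s2: "Z \<subseteq> D \<union> E"
    and dt: "tp D \<noteq> tp E" and dist: "card (D - E) < length vs - 1"
  shows "tp Z = tp D \<or> tp Z = tp E"
proof (rule ccontr)
  assume nz: "\<not> (tp Z = tp D \<or> tp Z = tp E)"
  obtain ws where ws: "exch_path Q le n ws" "hd ws = D" "last ws = E" "Z \<in> set ws"
      "length ws = Suc (card (D - E))"
    using path_through[OF posQ finQ ndD ndE ndZ s1 s2 refl] by blast
  have ne: "ws \<noteq> []" using ws(5) by auto
  obtain j where j: "j < length ws" "ws ! j = Z" using ws(4) by (meson in_set_conv_nth)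
  have w0: "ws ! 0 = D" using ws(2) ne by (simp add: hd_conv_nth)
  have wl: "ws ! (length ws - 1) = E" using ws(3) ne by (simp add: last_conv_nth)
  have j0: "0 < j"
  proof (rule ccontr)
    assume "\<not> 0 < j" then have "j = 0" by simp
    then show False using j w0 nz by simp
  qed
  have jl: "j < length ws - 1"
  proof (rule ccontr)
    assume "\<not> j < length ws - 1" then have "j = length ws - 1" using j by simp
    then show False using j wl nz by simp
  qed
  have lt: "length ws < length vs" using ws(5) dist by simp
  have ll: "length ws - 1 < length ws" using ne by simp
  have e1: "tp (ws!0) \<noteq> tp (ws!j)" using w0 j nz by metis
  have e2: "tp (ws!j) \<noteq> tp (ws!(length ws - 1))" using wl j nz by simp
  have e3: "tp (ws!0) \<noteq> tp (ws!(length ws - 1))" using w0 wl dt by simp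
  show False by (rule no_three[OF ws(1) lt j0 jl ll e1 e2 e3])
qed

lemma no_short:
  assumes len: "4 \<le> length vs" and nd1: "nd W1" and nd2: "nd Y" and nd3: "nd W2"
    and a1: "exch_adj W1 Y" and a2: "exch_adj Y W2"
    and d1: "tp W1 \<noteq> tp Y" and d2: "tp Y \<noteq> tp W2" and d3: "tp W1 \<noteq> tp W2"
  shows False
proof -
  have ne: "W1 \<noteq> Y" "Y \<noteq> W2" "W1 \<noteq> W2" using d1 d2 d3 by auto
  have "exch_path Q le n [W1, Y, W2]" unfolding exch_path_def
  proof (intro conjI allI impI)
    show "[W1, Y, W2] \<noteq> []" by simp
    show "distinct [W1, Y, W2]" using ne by simp
    show "\<forall>v\<in>set [W1, Y, W2]. nd v" using nd1 nd2 nd3 by simp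
    fix i assume "Suc i < length [W1, Y, W2]"
    then have "i = 0 \<or> i = 1" by auto
    then show "exch_adj ([W1, Y, W2] ! i) ([W1, Y, W2] ! Suc i)" using a1 a2 by auto
  qed
  moreover have "length [W1, Y, W2] < length vs" using len by simp
  ultimately show False using no_three[of "[W1, Y, W2]" 0 1 2] d1 d2 d3 by simp
qed

lemma len_m: "card (hd vs - last vs) \<le> length vs - 1"
  using dist_vs[of 0 "length vs - 1"] vs_ne by (simp add: hd_conv_nth last_conv_nth)

lemma card_AC: "card (hd vs - last vs) = card (last vs - hd vs)"
proof -
  have f: "finite (hd vs)" "finite (last vs)" using nd_hd nd_last nd_finite by blast+
  have c: "card (hd vs) = card (last vs)" using nd_card[OF nd_hd] nd_card[OF nd_last] by simp
  have "card (hd vs) = card (hd vs \<inter> last vs) + card (hd vs - last vs)" using card_Int_Diff[OF f(1)] .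
  moreover have "card (last vs) = card (last vs \<inter> hd vs) + card (last vs - hd vs)" using card_Int_Diff[OF f(2)] .
  moreover have "last vs \<inter> hd vs = hd vs \<inter> last vs" by blast
  ultimately show ?thesis using c by simp
qed

lemma IM_dist:
  assumes IV: "IMf Q le n (hd vs) (last vs) V"
  shows "card (V - last vs) < length vs - 1"
proof -
  have ndV: "nd V" and s1: "hd vs \<inter> last vs \<subseteq> V" and s2: "V \<subseteq> hd vs \<union> last vs" and nA: "V \<noteq> hd vs"
    using IV unfolding IMf_def by blast+
  have fA: "finite (hd vs)" using nd_hd nd_finite by blast
  have sub: "V - last vs \<subseteq> hd vs - last vs" using s2 by blast
  have "V - last vs \<noteq> hd vs - last vs"
  proof
    assume eq: "V - last vs = hd vs - last vs"
    then have "hd vs \<subseteq> V" using s1 by blast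
    moreover have "card (hd vs) = card V" using nd_card[OF ndV] nd_card[OF nd_hd] by simp
    ultimately have "hd vs = V" using card_subset_eq[OF nd_finite[OF ndV]] by blast
    then show False using nA by simp
  qed
  then have "V - last vs \<subset> hd vs - last vs" using sub by blast
  then have "card (V - last vs) < card (hd vs - last vs)" using fA by (simp add: psubset_card_mono)
  then show ?thesis using len_m by simp
qed

end

lemma downsetD: "downset Q le D \<Longrightarrow> w \<in> D \<Longrightarrow> u \<in> Q \<Longrightarrow> le u w \<Longrightarrow> u \<in> D"
  unfolding downset_def by blast
lemma downset_sub: "downset Q le D \<Longrightarrow> D \<subseteq> Q"
  unfolding downset_def by blast
lemma downsetI: "D \<subseteq> Q \<Longrightarrow> (\<And>w u. w \<in> D \<Longrightarrow> u \<in> Q \<Longrightarrow> le u w \<Longrightarrow> u \<in> D) \<Longrightarrow> downset Q le D"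
  unfolding downset_def by blast

lemma nd_swap:
  assumes "ndownset Q le n D" "x \<in> D" "y \<notin> D" "downset Q le (D - {x} \<union> {y})"
  shows "ndownset Q le n (D - {x} \<union> {y})"
proof -
  have f: "finite D" using assms(1) nd_finite by blast
  have c: "card (D - {x} \<union> {y}) = n" using trans[OF card_swap[OF f assms(2,3)] nd_card[OF assms(1)]] .
  have "finite (D - {x} \<union> {y})" using f by simp
  then show ?thesis unfolding ndownset_def using c assms(4) by blast
qed

context msp
begin

lemma len4: "3 \<le> card (hd vs - last vs) \<Longrightarrow> 4 \<le> length vs"
  using len_m by simp

lemma exists_b:
  assumes m3: "3 \<le> card (hd vs - last vs)"
  shows "\<exists>W. IMf Q le n (hd vs) (last vs) W \<and> tp W = (SB, rB)"
proof -
  obtain A C where AC: "A = hd vs" "C = last vs" by blast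
  define v1 where "v1 = vs ! 1"
  have len: "4 \<le> length vs" using len4 m3 by simp
  have ndA: "nd A" and ndC: "nd C" using nd_hd nd_last AC by simp_all
  have ndv1: "nd v1" unfolding v1_def using vs_nd len by simp
  have dA: "downset Q le A" and dC: "downset Q le C" and dv1: "downset Q le v1"
    using ndA ndC ndv1 nd_down by blast+
  have tA: "tp A = (SA, rA)" and tC: "tp C = (SC, rC)" using tpA tpC AC by simp_all
  have tv1: "tp v1 = (SB, rB)" unfolding v1_def using tpB[of 1] len by simp
  have adj: "exch_adj A v1" unfolding v1_def AC using vs_adj[of 0] len vs_ne by (simp add: hd_conv_nth)
  obtain x y where xy: "A - v1 = {x}" "v1 - A = {y}" using exch_adj_decomp[OF adj] by blast
  have x: "x \<in> A" "x \<notin> v1" and y: "y \<in> v1" "y \<notin> A" using xy by blast+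
  have v1eq: "v1 = A - {x} \<union> {y}" using xy by blast
  have h1: "1 \<le> length vs - 1" and h2: "length vs - 1 < length vs" using len by simp_all
  have "card (vs ! 1 - vs ! (length vs - 1)) \<le> length vs - 1 - 1" using dist_vs[OF h1 h2] .
  then have dist1: "card (v1 - C) < length vs - 1"
    unfolding v1_def AC using len vs_ne by (simp add: last_conv_nth)
  have PC: "A - C \<noteq> {}"
  proof
    assume "A - C = {}" then have "card (A - C) = 0" by (metis card.empty)
    then show False using m3 AC by simp
  qed
  have RC: "C - A \<noteq> {}"
  proof
    assume "C - A = {}" then have "card (C - A) = 0" by (metis card.empty)
    then show False using m3 card_AC AC by simp
  qed
  have finA: "finite A" and finC: "finite C" using ndA ndC nd_finite by blast+
  have QA: "A \<subseteq> Q" and QC: "C \<subseteq> Q" using dA dC downset_sub by blast+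
  have tBC: "(SB, rB) \<noteq> (SC, rC)" and tAB': "(SA, rA) \<noteq> (SB, rB)" and tAC': "(SA, rA) \<noteq> (SC, rC)"
    using tAB tAC tBC by blast+
  have W_IM: "IMf Q le n A C W" if "nd W" "A \<inter> C \<subseteq> W" "W \<subseteq> A \<union> C" "tp W = (SB, rB)" for W
    unfolding IMf_def using that tA tC tAB' tBC by auto
  consider (a) "x \<in> C" "y \<notin> C" | (b) "x \<in> C" "y \<in> C" | (c) "x \<notin> C" "y \<in> C" | (d) "x \<notin> C" "y \<notin> C"
    by blast
  then have "\<exists>W. IMf Q le n A C W \<and> tp W = (SB, rB)"
  proof cases
    case a
    have s1: "v1 \<inter> C \<subseteq> A" using v1eq a by blast
    have s2: "A \<subseteq> v1 \<union> C" using v1eq a by blast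
    have "tp A = tp v1 \<or> tp A = tp C"
      using two_types[OF ndv1 ndC ndA s1 s2 _ dist1] tv1 tC tBC by simp
    then have False using tA tv1 tC tAB' tAC' by auto
    then show ?thesis by blast
  next
    case b
    obtain p where p: "p \<in> A - C" "\<forall>z\<in>A - C. le p z \<longrightarrow> z = p"
      using ex_maximal[OF posQ, of "A - C"] finA PC QA by blast
    define Y where "Y = A - {p} \<union> {y}"
    have pA: "p \<in> A" "p \<notin> C" using p by blast+
    have yQ: "y \<in> Q" using y dv1 downset_sub by blast
    have dY: "downset Q le Y"
    proof (rule downsetI)
      show "Y \<subseteq> Q" unfolding Y_def using QA yQ by blast
    next
      fix w u assume w: "w \<in> Y" and u: "u \<in> Q" "le u w"
      show "u \<in> Y"
      proof (cases "w = y")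
        case True
        have "u \<in> v1" using downsetD[OF dv1 _ u] y True by blast
        moreover have "u \<in> C" using downsetD[OF dC _ u] b True by blast
        ultimately show ?thesis unfolding Y_def using v1eq pA by blast
      next
        case False
        then have wA: "w \<in> A" "w \<noteq> p" using w y unfolding Y_def by blast+
        have uA: "u \<in> A" using downsetD[OF dA wA(1) u] .
        have "u \<noteq> p"
        proof
          assume up: "u = p"
          show False
          proof (cases "w \<in> C")
            case True
            then have "p \<in> C" using downsetD[OF dC True u(1)] u up by blast
            then show False using pA by blast
          next
            case False
            then show False using p wA u up by blast
          qed
        qed
        then show ?thesis unfolding Y_def using uA by blast
      qed
    qed
    have ndY: "nd Y" unfolding Y_def using nd_swap[OF ndA pA(1) y(2)] dY unfolding Y_def by blast
    have s1: "v1 \<inter> C \<subseteq> Y" unfolding Y_def using v1eq pA by blast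
    have s2: "Y \<subseteq> v1 \<union> C" unfolding Y_def using v1eq b by blast
    have tY: "tp Y = tp v1 \<or> tp Y = tp C"
      using two_types[OF ndv1 ndC ndY s1 s2 _ dist1] tv1 tC tBC by simp
    have "tp Y \<noteq> (SC, rC)"
    proof
      assume tYC: "tp Y = (SC, rC)"
      have pv1: "p \<in> v1" using v1eq pA b by blast
      have Yeq: "Y = v1 - {p} \<union> {x}" unfolding Y_def using v1eq pA b x y by blast
      have a1: "exch_adj v1 Y" unfolding Yeq by (rule exch_adj_swap(1)[OF pv1 x(2)])
      have a2: "exch_adj Y A" unfolding Y_def by (rule exch_adj_swap(2)[OF pA(1) y(2)])
      show False using no_short[OF len ndv1 ndY ndA a1 a2] tv1 tYC tA tAB' tAC' tBC by auto
    qed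
    then have "tp Y = (SB, rB)" using tY tv1 tC by auto
    moreover have "A \<inter> C \<subseteq> Y" "Y \<subseteq> A \<union> C" unfolding Y_def using pA b by blast+
    ultimately show ?thesis using W_IM ndY by blast
  next
    case c
    have "A \<inter> C \<subseteq> v1" "v1 \<subseteq> A \<union> C" using v1eq c by blast+
    then show ?thesis using W_IM ndv1 tv1 by blast
  next
    case d
    obtain q where q: "q \<in> C - A" "\<forall>z\<in>C - A. le z q \<longrightarrow> z = q"
      using ex_minimal[OF posQ, of "C - A"] finC RC QC by blast
    define Y where "Y = A - {x} \<union> {q}"
    have qC: "q \<in> C" "q \<notin> A" using q by blast+
    have dY: "downset Q le Y"
    proof (rule downsetI)
      show "Y \<subseteq> Q" unfolding Y_def using QA QC qC by blast
    next
      fix w u assume w: "w \<in> Y" and u: "u \<in> Q" "le u w"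
      show "u \<in> Y"
      proof (cases "w = q")
        case True
        have uC: "u \<in> C" using downsetD[OF dC qC(1) u(1)] u True by blast
        show ?thesis
        proof (cases "u \<in> A")
          case True
          then show ?thesis unfolding Y_def using uC d by blast
        next
          case False
          then show ?thesis unfolding Y_def using q uC u True by blast
        qed
      next
        case False
        then have wA: "w \<in> A" "w \<in> v1" using w unfolding Y_def using v1eq by blast+
        have "u \<in> A" "u \<in> v1" using downsetD[OF dA wA(1) u] downsetD[OF dv1 wA(2) u] by blast+
        then show ?thesis unfolding Y_def using x by blast
      qed
    qed
    have ndY: "nd Y" unfolding Y_def using nd_swap[OF ndA x(1) qC(2)] dY unfolding Y_def by blast
    have s1: "v1 \<inter> C \<subseteq> Y" unfolding Y_def using v1eq d by blast
    have s2: "Y \<subseteq> v1 \<union> C" unfolding Y_def using v1eq qC by blast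
    have tY: "tp Y = tp v1 \<or> tp Y = tp C"
      using two_types[OF ndv1 ndC ndY s1 s2 _ dist1] tv1 tC tBC by simp
    have "tp Y \<noteq> (SC, rC)"
    proof
      assume tYC: "tp Y = (SC, rC)"
      have qv1: "q \<notin> v1" using v1eq qC d by blast
      have Yeq: "Y = v1 - {y} \<union> {q}" unfolding Y_def using v1eq x y by blast
      have a1: "exch_adj v1 Y" unfolding Yeq by (rule exch_adj_swap(1)[OF y(1) qv1])
      have a2: "exch_adj Y A" unfolding Y_def by (rule exch_adj_swap(2)[OF x(1) qC(2)])
      show False using no_short[OF len ndv1 ndY ndA a1 a2] tv1 tYC tA tAB' tAC' tBC by auto
    qed
    then have "tp Y = (SB, rB)" using tY tv1 tC by auto
    moreover have "A \<inter> C \<subseteq> Y" "Y \<subseteq> A \<union> C" unfolding Y_def using d qC by blast+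
    ultimately show ?thesis using W_IM ndY by blast
  qed
  then show ?thesis using AC by simp
qed

end

context msp
begin

lemma adj_ab:
  assumes m3: "3 \<le> card (hd vs - last vs)"
    and IZ: "IMf Q le n (hd vs) (last vs) Z" and IW: "IMf Q le n (hd vs) (last vs) W"
    and adj: "exch_adj Z W" and tZ: "tp Z = (SA, rA)" and tW: "tp W = (SB, rB)"
  shows False
proof -
  obtain A C where AC: "A = hd vs" "C = last vs" by blast
  have len: "4 \<le> length vs" using len4 m3 by simp
  have ndA: "nd A" and ndC: "nd C" using nd_hd nd_last AC by simp_all
  have dA: "downset Q le A" and dC: "downset Q le C" using ndA ndC nd_down by blast+
  have tC: "tp C = (SC, rC)" using tpC AC by simp
  have tBC: "(SB, rB) \<noteq> (SC, rC)" and tAB': "(SA, rA) \<noteq> (SB, rB)" and tAC': "(SA, rA) \<noteq> (SC, rC)"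
    using tAB tAC tBC by blast+
  have ndZ: "nd Z" and Z1: "A \<inter> C \<subseteq> Z" and Z2: "Z \<subseteq> A \<union> C" and ZA: "Z \<noteq> A" and ZC: "Z \<noteq> C"
    using IZ AC unfolding IMf_def by blast+
  have ndW: "nd W" and W1: "A \<inter> C \<subseteq> W" and W2: "W \<subseteq> A \<union> C" and WA: "W \<noteq> A" and WC: "W \<noteq> C"
    using IW AC unfolding IMf_def by blast+
  have dZ: "downset Q le Z" and dW: "downset Q le W" using ndZ ndW nd_down by blast+
  have finW: "finite W" and finC: "finite C" using ndW ndC nd_finite by blast+
  have QW: "W \<subseteq> Q" and QC: "C \<subseteq> Q" using dW dC downset_sub by blast+
  have distZ: "card (Z - C) < length vs - 1" using IM_dist[OF IZ] AC by simp
  have distW: "card (W - C) < length vs - 1" using IM_dist[OF IW] AC by simp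
  obtain f e where fe: "Z - W = {f}" "W - Z = {e}" using exch_adj_decomp[OF adj] by blast
  have f: "f \<in> Z" "f \<notin> W" and e: "e \<in> W" "e \<notin> Z" using fe by blast+
  have common: "W - {e} = Z - {f}" using fe by blast
  have Zsub: "Z \<subseteq> W \<union> {f}" and Wsub: "W \<subseteq> Z \<union> {e}" using fe by blast+
  have tZC: "tp Z \<noteq> tp C" and tWC: "tp W \<noteq> tp C" using tZ tW tC tAC' tBC by simp_all
  consider (c1) "e \<notin> C" "f \<in> C" | (c2) "e \<in> C" "f \<notin> C" | (c3) "e \<notin> C" "f \<notin> C" | (c4) "e \<in> C" "f \<in> C"
    by blast
  then show False
  proof cases
    case c1
    have s1: "W \<inter> C \<subseteq> Z" using common c1 by blast
    have s2: "Z \<subseteq> W \<union> C" using Zsub c1 by blast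
    have "tp Z = tp W \<or> tp Z = tp C" using two_types[OF ndW ndC ndZ s1 s2 tWC distW] .
    then show False using tZ tW tC tAB' tAC' by auto
  next
    case c2
    have s1: "Z \<inter> C \<subseteq> W" using common c2 by blast
    have s2: "W \<subseteq> Z \<union> C" using Wsub c2 by blast
    have "tp W = tp Z \<or> tp W = tp C" using two_types[OF ndZ ndC ndW s1 s2 tZC distZ] .
    then show False using tZ tW tC tAB' tBC by auto
  next
    case c3
    have CW: "C - W \<noteq> {}"
    proof
      assume "C - W = {}"
      then have "C \<subseteq> W" by blast
      moreover have "card C = card W" using nd_card[OF ndC] nd_card[OF ndW] by simp
      ultimately have "C = W" using card_subset_eq[OF finW] by blast
      then show False using WC by simp
    qed
    obtain g where g: "g \<in> C - W" "\<forall>z\<in>C - W. le z g \<longrightarrow> z = g"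
      using ex_minimal[OF posQ, of "C - W"] finC CW QC by blast
    define Y where "Y = W - {e} \<union> {g}"
    have gC: "g \<in> C" "g \<notin> W" using g by blast+
    have dY: "downset Q le Y"
    proof (rule downsetI)
      show "Y \<subseteq> Q" unfolding Y_def using QW QC gC by blast
    next
      fix w u assume w: "w \<in> Y" and u: "u \<in> Q" "le u w"
      show "u \<in> Y"
      proof (cases "w = g")
        case True
        have uC: "u \<in> C" using downsetD[OF dC gC(1) u(1)] u True by blast
        show ?thesis
        proof (cases "u \<in> W")
          case True
          then show ?thesis unfolding Y_def using uC c3 by blast
        next
          case False
          then show ?thesis unfolding Y_def using g uC u \<open>w = g\<close> by blast
        qed
      next
        case False
        then have wW: "w \<in> W" "w \<in> Z" using w common unfolding Y_def by blast+
        have "u \<in> W" "u \<in> Z" using downsetD[OF dW wW(1) u] downsetD[OF dZ wW(2) u] by blast+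
        then show ?thesis unfolding Y_def using e by blast
      qed
    qed
    have ndY: "nd Y" unfolding Y_def using nd_swap[OF ndW e(1) gC(2)] dY unfolding Y_def by blast
    have s1: "W \<inter> C \<subseteq> Y" unfolding Y_def using c3 by blast
    have s2: "Y \<subseteq> W \<union> C" unfolding Y_def using gC by blast
    have tY1: "tp Y = tp W \<or> tp Y = tp C" using two_types[OF ndW ndC ndY s1 s2 tWC distW] .
    have s3: "Z \<inter> C \<subseteq> Y" unfolding Y_def using common c3 by blast
    have s4: "Y \<subseteq> Z \<union> C" unfolding Y_def using common gC by blast
    have tY2: "tp Y = tp Z \<or> tp Y = tp C" using two_types[OF ndZ ndC ndY s3 s4 tZC distZ] .
    have tYC: "tp Y = (SC, rC)" using tY1 tY2 tZ tW tC tAB' by auto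
    have gZ: "g \<notin> Z" using gC Zsub c3 by blast
    have Yeq: "Y = Z - {f} \<union> {g}" unfolding Y_def using common by simp
    have a1: "exch_adj Z Y" unfolding Yeq by (rule exch_adj_swap(1)[OF f(1) gZ])
    have a2: "exch_adj Y W" unfolding Y_def by (rule exch_adj_swap(2)[OF e(1) gC(2)])
    show False using no_short[OF len ndZ ndY ndW a1 a2] tZ tYC tW tAB' tAC' tBC by auto
  next
    case c4
    have WC': "W - C \<noteq> {}"
    proof
      assume "W - C = {}"
      then have "W \<subseteq> C" by blast
      moreover have "card W = card C" using nd_card[OF ndC] nd_card[OF ndW] by simp
      ultimately have "W = C" using card_subset_eq[OF finC] by blast
      then show False using WC by simp
    qed
    obtain h where h: "h \<in> W - C" "\<forall>z\<in>W - C. le h z \<longrightarrow> z = h"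
      using ex_maximal[OF posQ, of "W - C"] finW WC' QW by blast
    have hW: "h \<in> W" "h \<notin> C" using h by blast+
    have hZ: "h \<in> Z" using hW common c4 by blast
    define Y where "Y = W - {h} \<union> {f}"
    have dY: "downset Q le Y"
    proof (rule downsetI)
      show "Y \<subseteq> Q" unfolding Y_def using QW f dZ downset_sub by blast
    next
      fix w u assume w: "w \<in> Y" and u: "u \<in> Q" "le u w"
      have wZW: "w \<in> Z \<union> W" using w f unfolding Y_def by blast
      have uZW: "u \<in> Z \<union> W" using wZW downsetD[OF dZ _ u] downsetD[OF dW _ u] by blast
      have wh: "w \<noteq> h" using w hW unfolding Y_def using f by blast
      have "u \<noteq> h"
      proof
        assume uh: "u = h"
        show False
        proof (cases "w \<in> C")
          case True
          then have "h \<in> C" using downsetD[OF dC True u(1)] u uh by blast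
          then show False using hW by blast
        next
          case False
          have "w \<in> W"
          proof (rule ccontr)
            assume "w \<notin> W" then have "w = f" using wZW fe by blast
            then show False using False c4 by blast
          qed
          then show False using h False wh u uh by blast
        qed
      qed
      then show "u \<in> Y" unfolding Y_def using uZW Zsub by blast
    qed
    have ndY: "nd Y" unfolding Y_def using nd_swap[OF ndW hW(1) f(2)] dY unfolding Y_def by blast
    have s1: "W \<inter> C \<subseteq> Y" unfolding Y_def using hW by blast
    have s2: "Y \<subseteq> W \<union> C" unfolding Y_def using c4 by blast
    have tY1: "tp Y = tp W \<or> tp Y = tp C" using two_types[OF ndW ndC ndY s1 s2 tWC distW] .
    have Yeq: "Y = Z - {h} \<union> {e}" unfolding Y_def using fe hW c4 by blast
    have s3: "Z \<inter> C \<subseteq> Y" unfolding Yeq using hW by blast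
    have s4: "Y \<subseteq> Z \<union> C" unfolding Yeq using c4 by blast
    have tY2: "tp Y = tp Z \<or> tp Y = tp C" using two_types[OF ndZ ndC ndY s3 s4 tZC distZ] .
    have tYC: "tp Y = (SC, rC)" using tY1 tY2 tZ tW tC tAB' by auto
    have a1: "exch_adj Z Y" unfolding Yeq by (rule exch_adj_swap(1)[OF hZ e(2)])
    have a2: "exch_adj Y W" unfolding Y_def by (rule exch_adj_swap(2)[OF hW(1) f(2)])
    show False using no_short[OF len ndZ ndY ndW a1 a2] tZ tYC tW tAB' tAC' tBC by auto
  qed
qed

lemma rev_msp: "msp Q le n SC SB SA rC rB rA G (rev vs)"
proof (unfold_locales)
  show "partial_order_on' Q le" by (rule posQ)
  show "\<not> poset_iso SC rC SB rB" by (rule nCB)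
  show "\<not> poset_iso SC rC SA rA" by (rule nCA)
  show "\<not> poset_iso SB rB SA rA" by (rule nBA)
  show "G = {(SC, rC), (SB, rB), (SA, rA)}" using G_def by auto
  show "witness Q le n G" by (rule wit)
  show "finite Q" by (rule finQ)
  show "poset_iso (hd (rev vs)) le SC rC" using isoC vs_ne by (simp add: hd_rev)
  show "poset_iso (last (rev vs)) le SA rA" using isoA vs_ne by (simp add: last_rev)
  show "\<forall>i. 0 < i \<and> i < length (rev vs) - 1 \<longrightarrow> poset_iso (rev vs ! i) le SB rB"
  proof (intro allI impI)
    fix i assume i: "0 < i \<and> i < length (rev vs) - 1"
    then have "i < length vs" by (simp only: length_rev) linarith
    then have "rev vs ! i = vs ! (length vs - Suc i)" by (rule rev_nth)
    moreover have "0 < length vs - Suc i" "length vs - Suc i < length vs - 1" using i by auto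
    ultimately show "poset_iso (rev vs ! i) le SB rB" using isoB by simp
  qed
  have ep: "exch_path Q le n (rev vs)" unfolding exch_path_def
  proof (intro conjI allI impI)
    show "rev vs \<noteq> []" using vs_ne by simp
    show "distinct (rev vs)" using vs_path unfolding exch_path_def by simp
    show "\<forall>v\<in>set (rev vs). nd v" using vs_path unfolding exch_path_def by simp
    fix i assume i: "Suc i < length (rev vs)"
    have e1: "rev vs ! i = vs ! Suc (length vs - Suc (Suc i))" using i by (simp add: rev_nth Suc_diff_Suc)
    have e2: "rev vs ! Suc i = vs ! (length vs - Suc (Suc i))" using i by (simp add: rev_nth)
    have "exch_adj (vs ! (length vs - Suc (Suc i))) (vs ! Suc (length vs - Suc (Suc i)))"
      using vs_adj i by simp
    then show "exch_adj (rev vs ! i) (rev vs ! Suc i)" unfolding e1 e2 by (rule exch_adj_sym)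
  qed
  have sp: "special_path Q le n G vs" by (rule spec)
  then obtain P1 P2 P3 where P: "P1 \<in> G" "P2 \<in> G" "P3 \<in> G" "P1 \<noteq> P2" "P1 \<noteq> P3" "P2 \<noteq> P3"
    "poset_iso (hd vs) le (fst P1) (snd P1)"
    "\<forall>i. 0 < i \<and> i < length vs - 1 \<longrightarrow> poset_iso (vs ! i) le (fst P2) (snd P2)"
    "poset_iso (last vs) le (fst P3) (snd P3)"
    unfolding special_path_def by blast
  have in2: "\<forall>i. 0 < i \<and> i < length (rev vs) - 1 \<longrightarrow> poset_iso (rev vs ! i) le (fst P2) (snd P2)"
  proof (intro allI impI)
    fix i assume i: "0 < i \<and> i < length (rev vs) - 1"
    then have "i < length vs" by (simp only: length_rev) linarith
    then have "rev vs ! i = vs ! (length vs - Suc i)" by (rule rev_nth)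
    moreover have "0 < length vs - Suc i" "length vs - Suc i < length vs - 1" using i by auto
    ultimately show "poset_iso (rev vs ! i) le (fst P2) (snd P2)" using P(8) by simp
  qed
  have hdr: "hd (rev vs) = last vs" "last (rev vs) = hd vs" using vs_ne by (simp_all add: hd_rev last_rev)
  have core: "P3 \<noteq> P2 \<and> P3 \<noteq> P1 \<and> P2 \<noteq> P1 \<and> poset_iso (hd (rev vs)) le (fst P3) (snd P3) \<and>
    (\<forall>i. 0 < i \<and> i < length (rev vs) - 1 \<longrightarrow> poset_iso (rev vs ! i) le (fst P2) (snd P2)) \<and>
    poset_iso (last (rev vs)) le (fst P1) (snd P1)" using P in2 hdr by auto
  have ex: "\<exists>P1\<in>G. \<exists>P2\<in>G. \<exists>P3\<in>G. P1 \<noteq> P2 \<and> P1 \<noteq> P3 \<and> P2 \<noteq> P3 \<and>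
        poset_iso (hd (rev vs)) le (fst P1) (snd P1) \<and>
        (\<forall>i. 0 < i \<and> i < length (rev vs) - 1 \<longrightarrow> poset_iso (rev vs ! i) le (fst P2) (snd P2)) \<and>
        poset_iso (last (rev vs)) le (fst P3) (snd P3)"
    by (rule bexI[of _ P3], rule bexI[of _ P2], rule bexI[of _ P1]) (use core P in auto)
  have "3 \<le> length (rev vs)" using vs_len by simp
  then show "special_path Q le n G (rev vs)" unfolding special_path_def using ep ex by blast
  show "\<forall>ws. special_path Q le n G ws \<longrightarrow> length (rev vs) \<le> length ws" using minimal by simp
qed

lemma adj_cb:
  assumes m3: "3 \<le> card (hd vs - last vs)"
    and IZ: "IMf Q le n (hd vs) (last vs) Z" and IW: "IMf Q le n (hd vs) (last vs) W"
    and adj: "exch_adj Z W" and tZ: "tp Z = (SC, rC)" and tW: "tp W = (SB, rB)"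
  shows False
proof -
  interpret R: msp Q le n SC SB SA rC rB rA G "rev vs" by (rule rev_msp)
  have m3': "3 \<le> card (hd (rev vs) - last (rev vs))" using m3 card_AC vs_ne by (simp add: hd_rev last_rev)
  have IZ': "IMf Q le n (hd (rev vs)) (last (rev vs)) Z" using IZ IMf_sym[of Q le n "hd vs" "last vs" Z] vs_ne by (simp add: hd_rev last_rev)
  have IW': "IMf Q le n (hd (rev vs)) (last (rev vs)) W" using IW IMf_sym[of Q le n "hd vs" "last vs" W] vs_ne by (simp add: hd_rev last_rev)
  show False by (rule R.adj_ab[OF m3' IZ' IW' adj tZ tW])
qed

end

lemma card3: "card {a, b, c} \<le> 3"
proof -
  have "card {a, b, c} \<le> Suc (card {b, c})" by (rule card_insert_le_m1) auto
  moreover have "card {b, c} \<le> Suc (card {c})" by (rule card_insert_le_m1) auto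
  ultimately show ?thesis by simp
qed

lemma min_elt:
  assumes po: "partial_order_on' Q le" and dA: "downset Q le A" and dC: "downset Q le C"
    and dV: "downset Q le V" and VAC: "V \<subseteq> A \<union> C" and fV: "finite V" and ne: "V - C \<noteq> {}"
  shows "\<exists>p\<in>V - C. \<forall>u\<in>Q. le u p \<longrightarrow> u = p \<or> u \<in> A \<inter> C"
proof -
  obtain p where p: "p \<in> V - C" "\<forall>z\<in>V - C. le z p \<longrightarrow> z = p"
    using ex_minimal[OF po, of "V - C"] fV ne dV downset_sub by blast
  have pA: "p \<in> A" using p VAC by blast
  have "\<forall>u\<in>Q. le u p \<longrightarrow> u = p \<or> u \<in> A \<inter> C"
  proof (intro ballI impI)
    fix u assume u: "u \<in> Q" "le u p"
    have uV: "u \<in> V" using downsetD[OF dV _ u] p by blast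
    have uA: "u \<in> A" using downsetD[OF dA pA u] .
    show "u = p \<or> u \<in> A \<inter> C"
    proof (cases "u \<in> C")
      case True then show ?thesis using uA by blast
    next
      case False then show ?thesis using p uV u by blast
    qed
  qed
  then show ?thesis using p by blast
qed

context msp
begin

lemma prop_path:
  assumes m3: "3 \<le> card (hd vs - last vs)" and ws: "exch_path Q le n ws"
    and allIM: "\<forall>W\<in>set ws. IMf Q le n (hd vs) (last vs) W" and h: "tp (hd ws) = (SB, rB)"
  shows "\<forall>k<length ws. tp (ws ! k) = (SB, rB)"
proof -
  have ne: "ws \<noteq> []" using ws unfolding exch_path_def by blast
  have tBC: "(SB, rB) \<noteq> (SC, rC)" and tAB': "(SA, rA) \<noteq> (SB, rB)" and tAC': "(SA, rA) \<noteq> (SC, rC)"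
    using tAB tAC tBC by blast+
  have "k < length ws \<Longrightarrow> tp (ws ! k) = (SB, rB)" for k
  proof (induction k)
    case 0
    then show ?case using h ne by (simp add: hd_conv_nth)
  next
    case (Suc k)
    have k: "k < length ws" using Suc.prems by simp
    have tk: "tp (ws ! k) = (SB, rB)" using Suc.IH k by simp
    have Ik: "IMf Q le n (hd vs) (last vs) (ws ! k)" using allIM k by simp
    have Isk: "IMf Q le n (hd vs) (last vs) (ws ! Suc k)" using allIM Suc.prems by simp
    have adj: "exch_adj (ws ! k) (ws ! Suc k)" using ws Suc.prems unfolding exch_path_def by blast
    have adj': "exch_adj (ws ! Suc k) (ws ! k)" using exch_adj_sym[OF adj] .
    have ndsk: "nd (ws ! Suc k)" using Isk unfolding IMf_def by blast
    have "tp (ws ! Suc k) \<in> {(SA, rA), (SB, rB), (SC, rC)}" using tp_in[OF ndsk] .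
    moreover have "tp (ws ! Suc k) \<noteq> (SA, rA)"
    proof
      assume "tp (ws ! Suc k) = (SA, rA)"
      then show False using adj_ab[OF m3 Isk Ik adj' _ tk] by blast
    qed
    moreover have "tp (ws ! Suc k) \<noteq> (SC, rC)"
    proof
      assume "tp (ws ! Suc k) = (SC, rC)"
      then show False using adj_cb[OF m3 Isk Ik adj' _ tk] by blast
    qed
    ultimately show ?case by blast
  qed
  then show ?thesis by blast
qed

lemma linked:
  assumes m3: "3 \<le> card (hd vs - last vs)"
    and I1: "IMf Q le n (hd vs) (last vs) Z1" and I2: "IMf Q le n (hd vs) (last vs) Z2"
    and t1: "tp Z1 = (SB, rB)"
    and p: "p \<in> Z1" "p \<in> Z2" "p \<notin> last vs" and q: "q \<in> Z1" "q \<in> Z2" "q \<notin> hd vs"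
  shows "tp Z2 = (SB, rB)"
proof -
  have nd1: "nd Z1" and nd2: "nd Z2" using I1 I2 unfolding IMf_def by blast+
  have s1: "Z1 \<inter> Z2 \<subseteq> Z2" and s2: "Z2 \<subseteq> Z1 \<union> Z2" by blast+
  obtain ws where ws: "exch_path Q le n ws" "hd ws = Z1" "last ws = Z2"
    "\<forall>W\<in>set ws. Z1 \<inter> Z2 \<subseteq> W \<and> W \<subseteq> Z1 \<union> Z2 \<and> card (W - Z2) \<le> card (Z1 - Z2)"
    and "Z2 \<in> set ws" "length ws = Suc (card (Z1 - Z2))"
    using path_through[OF posQ finQ nd1 nd2 nd2 s1 s2 refl] by blast
  have ne: "ws \<noteq> []" using ws unfolding exch_path_def by blast
  have allIM: "\<forall>W\<in>set ws. IMf Q le n (hd vs) (last vs) W"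
  proof
    fix W assume W: "W \<in> set ws"
    have ndW: "nd W" using ws(1) W unfolding exch_path_def by blast
    have a: "Z1 \<inter> Z2 \<subseteq> W" "W \<subseteq> Z1 \<union> Z2" using ws(4) W by blast+
    have b: "hd vs \<inter> last vs \<subseteq> Z1" "hd vs \<inter> last vs \<subseteq> Z2" "Z1 \<subseteq> hd vs \<union> last vs" "Z2 \<subseteq> hd vs \<union> last vs"
      using I1 I2 unfolding IMf_def by blast+
    have c1: "hd vs \<inter> last vs \<subseteq> W" using a(1) b(1,2) by blast
    have c2: "W \<subseteq> hd vs \<union> last vs" using a(2) b(3,4) by blast
    have "p \<in> W" "q \<in> W" using a p q by blast+
    then have c3: "W \<noteq> hd vs" "W \<noteq> last vs" using p q by blast+
    show "IMf Q le n (hd vs) (last vs) W" unfolding IMf_def using ndW c1 c2 c3 by blast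
  qed
  have "\<forall>k<length ws. tp (ws ! k) = (SB, rB)" using prop_path[OF m3 ws(1) allIM] ws(2) t1 by simp
  then have "tp (ws ! (length ws - 1)) = (SB, rB)" using ne by simp
  then show ?thesis using ws(3) ne by (simp add: last_conv_nth)
qed

lemma build_IM:
  assumes m3: "3 \<le> card (hd vs - last vs)"
    and S: "S \<subseteq> hd vs \<union> last vs" "finite S" "card S \<le> 3"
    and mn: "\<forall>s\<in>S. \<forall>u\<in>Q. le u s \<longrightarrow> u = s \<or> u \<in> hd vs \<inter> last vs"
    and p: "p \<in> S" "p \<notin> last vs" and q: "q \<in> S" "q \<notin> hd vs"
  shows "\<exists>Z. IMf Q le n (hd vs) (last vs) Z \<and> S \<subseteq> Z"
proof -
  obtain A C where AC: "A = hd vs" "C = last vs" by blast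
  have ndA: "nd A" and ndC: "nd C" using nd_hd nd_last AC by simp_all
  have dA: "downset Q le A" and dC: "downset Q le C" using ndA ndC nd_down by blast+
  have fA: "finite A" and fC: "finite C" using ndA ndC nd_finite by blast+
  define L where "L = (A \<inter> C) \<union> S"
  have dL: "downset Q le L"
  proof (rule downsetI)
    show "L \<subseteq> Q" unfolding L_def using S(1) AC dA dC downset_sub by blast
  next
    fix w u assume w: "w \<in> L" and u: "u \<in> Q" "le u w"
    show "u \<in> L"
    proof (cases "w \<in> S")
      case True then show ?thesis using mn u AC unfolding L_def by blast
    next
      case False
      then have "w \<in> A" "w \<in> C" using w unfolding L_def by blast+
      then show ?thesis using downsetD[OF dA _ u] downsetD[OF dC _ u] unfolding L_def by blast
    qed
  qed
  have dAC: "downset Q le (A \<union> C)" using downset_Un[OF dA dC] .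
  have LAC: "L \<subseteq> A \<union> C" unfolding L_def using S(1) AC by blast
  have cI: "card A = card (A \<inter> C) + card (A - C)" using card_Int_Diff[OF fA] .
  have "card L \<le> card (A \<inter> C) + card S" unfolding L_def by (rule card_Un_le)
  also have "\<dots> \<le> card (A \<inter> C) + card (A - C)" using S(3) m3 AC by simp
  also have "\<dots> = n" using cI nd_card[OF ndA] by simp
  finally have cL: "card L \<le> n" .
  have "n \<le> card (A \<union> C)" using nd_card[OF ndA] card_mono[of "A \<union> C" A] fA fC by simp
  then obtain Z where Z: "downset Q le Z" "L \<subseteq> Z" "Z \<subseteq> A \<union> C" "card Z = n"
    using downset_between[OF posQ finQ dL dAC LAC cL] by blast
  have fZ: "finite Z" using Z(3) fA fC finite_subset by blast
  have ndZ: "nd Z" unfolding ndownset_def using Z fZ by blast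
  have "Z \<noteq> A" using Z(2) q AC unfolding L_def by blast
  moreover have "Z \<noteq> C" using Z(2) p AC unfolding L_def by blast
  moreover have "A \<inter> C \<subseteq> Z" using Z(2) unfolding L_def by blast
  ultimately have "IMf Q le n A C Z" unfolding IMf_def using ndZ Z(3) by blast
  moreover have "S \<subseteq> Z" using Z(2) unfolding L_def by blast
  ultimately show ?thesis using AC by blast
qed

lemma all_b:
  assumes m3: "3 \<le> card (hd vs - last vs)" and IZ: "IMf Q le n (hd vs) (last vs) Z"
  shows "tp Z = (SB, rB)"
proof -
  have ndA: "nd (hd vs)" and ndC: "nd (last vs)" using nd_hd nd_last by simp_all
  have dA: "downset Q le (hd vs)" and dC: "downset Q le (last vs)" using ndA ndC nd_down by blast+
  obtain W0 where W0: "IMf Q le n (hd vs) (last vs) W0" "tp W0 = (SB, rB)" using exists_b[OF m3] by blast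
  have elts: "\<exists>p\<in>V - last vs. \<forall>u\<in>Q. le u p \<longrightarrow> u = p \<or> u \<in> hd vs \<inter> last vs"
    "\<exists>q\<in>V - hd vs. \<forall>u\<in>Q. le u q \<longrightarrow> u = q \<or> u \<in> hd vs \<inter> last vs"
    if IV: "IMf Q le n (hd vs) (last vs) V" for V
  proof -
    have ndV: "nd V" and V1: "V \<subseteq> hd vs \<union> last vs" and VA: "V \<noteq> hd vs" and VC: "V \<noteq> last vs"
      using IV unfolding IMf_def by blast+
    have dV: "downset Q le V" and fV: "finite V" using ndV nd_down nd_finite by blast+
    have "V - last vs \<noteq> {}"
    proof
      assume "V - last vs = {}" then have "V \<subseteq> last vs" by blast
      moreover have "card V = card (last vs)" using nd_card[OF ndV] nd_card[OF ndC] by simp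
      ultimately have "V = last vs" using card_subset_eq[OF nd_finite[OF ndC]] by blast
      then show False using VC by simp
    qed
    then show "\<exists>p\<in>V - last vs. \<forall>u\<in>Q. le u p \<longrightarrow> u = p \<or> u \<in> hd vs \<inter> last vs"
      by (rule min_elt[OF posQ dA dC dV V1 fV])
    have ne2: "V - hd vs \<noteq> {}"
    proof
      assume "V - hd vs = {}" then have "V \<subseteq> hd vs" by blast
      moreover have "card V = card (hd vs)" using nd_card[OF ndV] nd_card[OF ndA] by simp
      ultimately have "V = hd vs" using card_subset_eq[OF nd_finite[OF ndA]] by blast
      then show False using VA by simp
    qed
    have V2: "V \<subseteq> last vs \<union> hd vs" using V1 by blast
    have "\<exists>q\<in>V - hd vs. \<forall>u\<in>Q. le u q \<longrightarrow> u = q \<or> u \<in> last vs \<inter> hd vs"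
      by (rule min_elt[OF posQ dC dA dV V2 fV ne2])
    then show "\<exists>q\<in>V - hd vs. \<forall>u\<in>Q. le u q \<longrightarrow> u = q \<or> u \<in> hd vs \<inter> last vs" by (simp add: Int_commute)
  qed
  obtain p0 where p0: "p0 \<in> W0" "p0 \<notin> last vs" "\<forall>u\<in>Q. le u p0 \<longrightarrow> u = p0 \<or> u \<in> hd vs \<inter> last vs"
    using elts(1)[OF W0(1)] by blast
  obtain q0 where q0: "q0 \<in> W0" "q0 \<notin> hd vs" "\<forall>u\<in>Q. le u q0 \<longrightarrow> u = q0 \<or> u \<in> hd vs \<inter> last vs"
    using elts(2)[OF W0(1)] by blast
  obtain pZ where pZ: "pZ \<in> Z" "pZ \<notin> last vs" "\<forall>u\<in>Q. le u pZ \<longrightarrow> u = pZ \<or> u \<in> hd vs \<inter> last vs"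
    using elts(1)[OF IZ] by blast
  obtain qZ where qZ: "qZ \<in> Z" "qZ \<notin> hd vs" "\<forall>u\<in>Q. le u qZ \<longrightarrow> u = qZ \<or> u \<in> hd vs \<inter> last vs"
    using elts(2)[OF IZ] by blast
  have W0s: "W0 \<subseteq> hd vs \<union> last vs" and Zs: "Z \<subseteq> hd vs \<union> last vs"
    using W0(1) IZ unfolding IMf_def by blast+
  have S1: "{p0, q0, qZ} \<subseteq> hd vs \<union> last vs" using p0(1) q0(1) qZ(1) W0s Zs by blast
  have mn1: "\<forall>s\<in>{p0, q0, qZ}. \<forall>u\<in>Q. le u s \<longrightarrow> u = s \<or> u \<in> hd vs \<inter> last vs"
    using p0(3) q0(3) qZ(3) by blast
  have fS1: "finite {p0, q0, qZ}" by simp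
  have i1: "p0 \<in> {p0, q0, qZ}" "q0 \<in> {p0, q0, qZ}" by simp_all
  obtain Z1 where Z1: "IMf Q le n (hd vs) (last vs) Z1" "{p0, q0, qZ} \<subseteq> Z1"
    using build_IM[OF m3 S1 fS1 card3 mn1 i1(1) p0(2) i1(2) q0(2)] by blast
  have S2: "{p0, pZ, qZ} \<subseteq> hd vs \<union> last vs" using p0(1) pZ(1) qZ(1) W0s Zs by blast
  have mn2: "\<forall>s\<in>{p0, pZ, qZ}. \<forall>u\<in>Q. le u s \<longrightarrow> u = s \<or> u \<in> hd vs \<inter> last vs"
    using p0(3) pZ(3) qZ(3) by blast
  have fS2: "finite {p0, pZ, qZ}" by simp
  have i2: "p0 \<in> {p0, pZ, qZ}" "qZ \<in> {p0, pZ, qZ}" by simp_all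
  obtain Z2 where Z2: "IMf Q le n (hd vs) (last vs) Z2" "{p0, pZ, qZ} \<subseteq> Z2"
    using build_IM[OF m3 S2 fS2 card3 mn2 i2(1) p0(2) i2(2) qZ(2)] by blast
  have a1: "p0 \<in> Z1" "q0 \<in> Z1" "qZ \<in> Z1" using Z1(2) by simp_all
  have a2: "p0 \<in> Z2" "pZ \<in> Z2" "qZ \<in> Z2" using Z2(2) by simp_all
  have t1: "tp Z1 = (SB, rB)"
    by (rule linked[OF m3 W0(1) Z1(1) W0(2) p0(1) a1(1) p0(2) q0(1) a1(2) q0(2)])
  have t2: "tp Z2 = (SB, rB)"
    by (rule linked[OF m3 Z1(1) Z2(1) t1 a1(1) a2(1) p0(2) a1(3) a2(3) qZ(2)])
  show ?thesis
    by (rule linked[OF m3 Z2(1) IZ t2 a2(2) pZ(1) pZ(2) a2(3) qZ(1) qZ(2)])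
qed

lemma all_cp:
  assumes m3: "3 \<le> card (hd vs - last vs)" and IZ: "IMf Q le n (hd vs) (last vs) Z"
  shows "(\<Sum>z\<in>Z. dg Q le z) = cp SB rB"
proof -
  have ndZ: "nd Z" using IZ unfolding IMf_def by blast
  have "tp Z = (SB, rB)" using all_b[OF m3 IZ] .
  then have "poset_iso Z le SB rB" using tp_prop[OF ndZ] by simp
  then have "cp Z le = cp SB rB" by (rule cp_iso)
  then show ?thesis using cp_downset[OF nd_down[OF ndZ] finQ] by simp
qed

end

definition pdown :: "'a set \<Rightarrow> ('a \<Rightarrow> 'a \<Rightarrow> bool) \<Rightarrow> 'a set \<Rightarrow> 'a set \<Rightarrow> nat \<Rightarrow> 'a set \<Rightarrow> bool" where
  "pdown Q le X A s W \<longleftrightarrow> downset Q le W \<and> X \<subseteq> W \<and> W \<subseteq> A \<and> card W = card X + s"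

definition remv :: "'a set \<Rightarrow> ('a \<Rightarrow> 'a \<Rightarrow> bool) \<Rightarrow> 'a set \<Rightarrow> 'a set \<Rightarrow> nat \<Rightarrow> 'a \<Rightarrow> bool" where
  "remv Q le X A s e \<longleftrightarrow> (\<exists>W. pdown Q le X A s W \<and> e \<in> W \<and> e \<notin> X \<and> downset Q le (W - {e}))"

locale cpc =
  fixes Q :: "'a set" and le :: "'a \<Rightarrow> 'a \<Rightarrow> bool" and X A C :: "'a set" and kap :: nat
  assumes po: "partial_order_on' Q le" and fin: "finite Q"
    and dA: "downset Q le A" and dC: "downset Q le C" and X_def: "X = A \<inter> C"
    and cAC: "card A = card C" and m3: "3 \<le> card (A - C)"
    and kap: "\<And>Z. downset Q le Z \<Longrightarrow> X \<subseteq> Z \<Longrightarrow> Z \<subseteq> A \<union> C \<Longrightarrow> card Z = card A \<Longrightarrow> Z \<noteq> A \<Longrightarrow> Z \<noteq> C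
       \<Longrightarrow> (\<Sum>z\<in>Z. dg Q le z) = kap"
begin

abbreviation "m \<equiv> card (A - C)"
abbreviation "sg W \<equiv> (\<Sum>z\<in>W. dg Q le z)"

lemma finA: "finite A" using finite_subset[OF downset_sub[OF dA] fin] .
lemma finC: "finite C" using finite_subset[OF downset_sub[OF dC] fin] .
lemma finX: "finite X" using finA X_def by simp
lemma dX: "downset Q le X" using downset_Int[OF dA dC] X_def by simp

lemma cardA: "card A = card X + m"
  using card_Int_Diff[OF finA, of C] X_def by simp
lemma cardC: "card C = card X + card (C - A)"
proof -
  have "card C = card (C \<inter> A) + card (C - A)" using card_Int_Diff[OF finC, of A] .
  moreover have "C \<inter> A = X" using X_def by blast
  ultimately show ?thesis by simp
qed
lemma mCA: "card (C - A) = m" using cardA cardC cAC by simp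

lemma sym: "cpc Q le X C A kap"
proof (unfold_locales)
  show "partial_order_on' Q le" by (rule po)
  show "finite Q" by (rule fin)
  show "downset Q le C" by (rule dC)
  show "downset Q le A" by (rule dA)
  show "X = C \<inter> A" using X_def by blast
  show "card C = card A" using cAC by simp
  show "3 \<le> card (C - A)" using mCA m3 by simp
  fix Z assume "downset Q le Z" "X \<subseteq> Z" "Z \<subseteq> C \<union> A" "card Z = card C" "Z \<noteq> C" "Z \<noteq> A"
  then show "(\<Sum>z\<in>Z. dg Q le z) = kap" using kap[of Z] cAC by (simp add: Un_commute)
qed

lemma pdown_ex: "s \<le> m \<Longrightarrow> \<exists>W. pdown Q le X A s W"
proof -
  assume s: "s \<le> m"
  have c1: "card X \<le> card X + s" by simp
  have c2: "card X + s \<le> card A" using cardA s by simp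
  have XA: "X \<subseteq> A" using X_def by blast
  obtain W where "downset Q le W" "X \<subseteq> W" "W \<subseteq> A" "card W = card X + s"
    using downset_between[OF po fin dX dA XA c1 c2] by blast
  then show ?thesis unfolding pdown_def by blast
qed

lemma core:
  assumes W: "pdown Q le X A s W" and V: "pdown Q le X C t V" and st: "s + t = m" and s1: "1 \<le> s" and t1: "1 \<le> t"
  shows "sg W + sg V = kap + sg X"
proof -
  have dW: "downset Q le W" and XW: "X \<subseteq> W" and WA: "W \<subseteq> A" and cW: "card W = card X + s"
    using W unfolding pdown_def by blast+
  have dV: "downset Q le V" and XV: "X \<subseteq> V" and VC: "V \<subseteq> C" and cV: "card V = card X + t"
    using V unfolding pdown_def by blast+
  have fW: "finite W" and fV: "finite V" using WA VC finA finC finite_subset by blast+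
  have WV: "W \<inter> V = X" using XW XV WA VC X_def by blast
  have cU: "card (W \<union> V) = card A"
  proof -
    have "card W + card V = card (W \<union> V) + card (W \<inter> V)" using card_Un_Int[OF fW fV] .
    then show ?thesis using cW cV WV cardA st by simp
  qed
  have "W - X \<noteq> {}"
  proof
    assume "W - X = {}" then have "W \<subseteq> X" by blast
    then have "card W \<le> card X" using card_mono[OF finX] by blast
    then show False using cW s1 by simp
  qed
  then obtain w where w: "w \<in> W" "w \<notin> X" by blast
  have "V - X \<noteq> {}"
  proof
    assume "V - X = {}" then have "V \<subseteq> X" by blast
    then have "card V \<le> card X" using card_mono[OF finX] by blast
    then show False using cV t1 by simp
  qed
  then obtain v where v: "v \<in> V" "v \<notin> X" by blast
  have wC: "w \<notin> C" using w WA X_def by blast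
  have vA: "v \<notin> A" using v VC X_def by blast
  have "W \<union> V \<noteq> A" using v vA by blast
  moreover have "W \<union> V \<noteq> C" using w wC by blast
  moreover have "downset Q le (W \<union> V)" using downset_Un[OF dW dV] .
  moreover have "X \<subseteq> W \<union> V" using XW by blast
  moreover have "W \<union> V \<subseteq> A \<union> C" using WA VC by blast
  ultimately have "sg (W \<union> V) = kap" using kap cU by blast
  moreover have "sg (W \<union> V) + sg (W \<inter> V) = sg W + sg V" using sum.union_inter[OF fW fV] .
  ultimately show ?thesis using WV by simp
qed

lemma same_sum:
  assumes W1: "pdown Q le X A s W1" and W2: "pdown Q le X A s W2" and s1: "1 \<le> s" and s2: "s + 1 \<le> m"
  shows "sg W1 = sg W2"
proof -
  interpret S: cpc Q le X C A kap by (rule sym)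
  obtain V where V: "pdown Q le X C (m - s) V" using S.pdown_ex[of "m - s"] mCA by auto
  have "sg W1 + sg V = kap + sg X" by (rule core[OF W1 V]) (use s1 s2 in auto)
  moreover have "sg W2 + sg V = kap + sg X" by (rule core[OF W2 V]) (use s1 s2 in auto)
  ultimately show ?thesis by simp
qed

lemma pdown_minus:
  assumes W: "pdown Q le X A s W" and e: "e \<in> W" "e \<notin> X" and d: "downset Q le (W - {e})"
  shows "pdown Q le X A (s - 1) (W - {e})" and "1 \<le> s" and "sg W = dg Q le e + sg (W - {e})"
proof -
  have XW: "X \<subseteq> W" and WA: "W \<subseteq> A" and cW: "card W = card X + s" using W unfolding pdown_def by blast+
  have fW: "finite W" using WA finA finite_subset by blast
  have "X \<subseteq> W - {e}" using XW e by blast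
  have "card (W - {e}) = card W - 1" using e(1) fW by simp
  have "X \<subset> W" using XW e by blast
  then have "card X < card W" using psubset_card_mono[OF fW] by blast
  then show "1 \<le> s" using cW by simp
  show "pdown Q le X A (s - 1) (W - {e})" unfolding pdown_def
    using d \<open>X \<subseteq> W - {e}\<close> WA \<open>card (W - {e}) = card W - 1\<close> cW \<open>1 \<le> s\<close> by auto
  show "sg W = dg Q le e + sg (W - {e})" using sum.remove[OF fW e(1)] .
qed

lemma rem_eq:
  assumes r1: "remv Q le X A s e" and r2: "remv Q le X A s e'" and s2: "2 \<le> s" and s3: "s + 1 \<le> m"
  shows "dg Q le e = dg Q le e'"
proof -
  obtain W where W: "pdown Q le X A s W" "e \<in> W" "e \<notin> X" "downset Q le (W - {e})"
    using r1 unfolding remv_def by blast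
  obtain W' where W': "pdown Q le X A s W'" "e' \<in> W'" "e' \<notin> X" "downset Q le (W' - {e'})"
    using r2 unfolding remv_def by blast
  have p1: "pdown Q le X A (s - 1) (W - {e})" and q1: "sg W = dg Q le e + sg (W - {e})"
    using pdown_minus[OF W] by blast+
  have p2: "pdown Q le X A (s - 1) (W' - {e'})" and q2: "sg W' = dg Q le e' + sg (W' - {e'})"
    using pdown_minus[OF W'] by blast+
  have "sg W = sg W'" by (rule same_sum[OF W(1) W'(1)]) (use s2 s3 in auto)
  moreover have "sg (W - {e}) = sg (W' - {e'})" by (rule same_sum[OF p1 p2]) (use s2 s3 in auto)
  ultimately show ?thesis using q1 q2 by simp
qed

lemma max_down:
  assumes W: "pdown Q le X A s W" and e: "e \<in> W" "e \<notin> X" and mx: "\<forall>z\<in>W - X. le e z \<longrightarrow> z = e"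
  shows "downset Q le (W - {e})"
proof -
  have dW: "downset Q le W" and XW: "X \<subseteq> W" and WA: "W \<subseteq> A" using W unfolding pdown_def by blast+
  have eC: "e \<notin> C" using e WA X_def by blast
  show ?thesis
  proof (rule downsetI)
    show "W - {e} \<subseteq> Q" using dW downset_sub by blast
  next
    fix w u assume w: "w \<in> W - {e}" and u: "u \<in> Q" "le u w"
    have uW: "u \<in> W" using downsetD[OF dW _ u] w by blast
    have "u \<noteq> e"
    proof
      assume ue: "u = e"
      show False
      proof (cases "w \<in> X")
        case True
        then have "w \<in> C" using X_def by blast
        then have "e \<in> C" using downsetD[OF dC _ u(1)] u ue by blast
        then show False using eC by blast
      next
        case False
        then show False using mx w u ue by blast
      qed
    qed
    then show "u \<in> W - {e}" using uW by blast
  qed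
qed

lemma max_rem:
  assumes W: "pdown Q le X A s W" and e: "e \<in> W" "e \<notin> X" and mx: "\<forall>z\<in>W - X. le e z \<longrightarrow> z = e"
  shows "remv Q le X A s e"
  unfolding remv_def using W e max_down[OF W e mx] by blast

lemma rem_ex:
  assumes s1: "1 \<le> s" and s2: "s \<le> m"
  shows "\<exists>e. remv Q le X A s e"
proof -
  obtain W where W: "pdown Q le X A s W" using pdown_ex[OF s2] by blast
  have XW: "X \<subseteq> W" and WA: "W \<subseteq> A" and cW: "card W = card X + s" using W unfolding pdown_def by blast+
  have fW: "finite W" using WA finA finite_subset by blast
  have "W - X \<noteq> {}"
  proof
    assume "W - X = {}" then have "W \<subseteq> X" by blast
    then have "card W \<le> card X" using card_mono[OF finX] by blast
    then show False using cW s1 by simp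
  qed
  then obtain e where e: "e \<in> W - X" "\<forall>z\<in>W - X. le e z \<longrightarrow> z = e"
    using ex_maximal[OF po, of "W - X"] fW WA dA downset_sub by blast
  have eW: "e \<in> W" "e \<notin> X" using e(1) by blast+
  show ?thesis using max_rem[OF W eW e(2)] by blast
qed

lemma rem_mono:
  assumes r1: "remv Q le X A s e'" and r2: "remv Q le X A (Suc s) e" and s2: "2 \<le> s" and s3: "s + 2 \<le> m"
  shows "dg Q le e' \<le> dg Q le e"
proof -
  obtain W where W: "pdown Q le X A (Suc s) W" using pdown_ex[of "Suc s"] s3 by auto
  have dW: "downset Q le W" and XW: "X \<subseteq> W" and WA: "W \<subseteq> A" and cW: "card W = card X + Suc s"
    using W unfolding pdown_def by blast+
  have fW: "finite W" using WA finA finite_subset by blast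
  have QW: "W \<subseteq> Q" using dW downset_sub by blast
  have "W - X \<noteq> {}"
  proof
    assume "W - X = {}" then have "W \<subseteq> X" by blast
    then have "card W \<le> card X" using card_mono[OF finX] by blast
    then show False using cW by simp
  qed
  then obtain e1 where e1: "e1 \<in> W - X" "\<forall>z\<in>W - X. le e1 z \<longrightarrow> z = e1"
    using ex_maximal[OF po, of "W - X"] fW QW by blast
  have e1W: "e1 \<in> W" "e1 \<notin> X" using e1(1) by blast+
  have re1: "remv Q le X A (Suc s) e1" using max_rem[OF W e1W e1(2)] .
  have dW1: "downset Q le (W - {e1})" using max_down[OF W e1W e1(2)] .
  have W1: "pdown Q le X A s (W - {e1})"
    using pdown_minus(1)[OF W e1W dW1] by simp
  have fW1: "finite (W - {e1})" using fW by simp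
  have cW1: "card (W - {e1}) = card X + s" using W1 unfolding pdown_def by blast
  have "(W - {e1}) - X \<noteq> {}"
  proof
    assume "(W - {e1}) - X = {}" then have "W - {e1} \<subseteq> X" by blast
    then have "card (W - {e1}) \<le> card X" using card_mono[OF finX] by blast
    then show False using cW1 s2 by simp
  qed
  then obtain e2 where e2: "e2 \<in> (W - {e1}) - X" "\<forall>z\<in>(W - {e1}) - X. le e2 z \<longrightarrow> z = e2"
    using ex_maximal[OF po, of "(W - {e1}) - X"] fW1 QW by blast
  have e2W: "e2 \<in> W - {e1}" "e2 \<notin> X" using e2(1) by blast+
  have re2: "remv Q le X A s e2" using max_rem[OF W1 e2W e2(2)] .
  have "dg Q le e2 \<le> dg Q le e1"
  proof (cases "le e2 e1")
    case True
    have "e2 \<noteq> e1" using e2(1) by blast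
    moreover have "e1 \<in> Q" "e2 \<in> Q" using e1(1) e2(1) QW by blast+
    ultimately show ?thesis using dg_strict[OF po fin _ _ True] by simp
  next
    case False
    have mx: "\<forall>z\<in>W - X. le e2 z \<longrightarrow> z = e2" using e2(2) False by blast
    have e2W': "e2 \<in> W" "e2 \<notin> X" using e2(1) by blast+
    have "remv Q le X A (Suc s) e2" using max_rem[OF W e2W' mx] .
    then have "dg Q le e2 = dg Q le e1" using rem_eq[OF _ re1] s2 s3 by simp
    then show ?thesis by simp
  qed
  moreover have "dg Q le e' = dg Q le e2" using rem_eq[OF r1 re2] s2 s3 by simp
  moreover have "dg Q le e = dg Q le e1" using rem_eq[OF r2 re1] s2 s3 by simp
  ultimately show ?thesis by simp
qed

end

context cpc
begin

lemma link:
  assumes r1: "remv Q le X A (Suc s) e" and r2: "remv Q le X C (m - s) g" and s1: "1 \<le> s" and s2: "s + 2 \<le> m"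
  shows "dg Q le e = dg Q le g"
proof -
  interpret S: cpc Q le X C A kap by (rule sym)
  obtain W where W: "pdown Q le X A (Suc s) W" "e \<in> W" "e \<notin> X" "downset Q le (W - {e})"
    using r1 unfolding remv_def by blast
  obtain V where V: "pdown Q le X C (m - s) V" "g \<in> V" "g \<notin> X" "downset Q le (V - {g})"
    using r2 unfolding remv_def by blast
  have W1: "pdown Q le X A s (W - {e})" using pdown_minus(1)[OF W] by simp
  have qW: "sg W = dg Q le e + sg (W - {e})" using pdown_minus(3)[OF W] .
  have V1: "pdown Q le X C (m - s - 1) (V - {g})" using S.pdown_minus(1)[OF V] .
  have qV: "sg V = dg Q le g + sg (V - {g})" using S.pdown_minus(3)[OF V] .
  have c1: "sg W + sg (V - {g}) = kap + sg X" by (rule core[OF W(1) V1]) (use s1 s2 in auto)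
  have c2: "sg (W - {e}) + sg V = kap + sg X" by (rule core[OF W1 V(1)]) (use s1 s2 in auto)
  show ?thesis using c1 c2 qW qV by simp
qed

lemma cons:
  assumes r1: "remv Q le X A k e" and r2: "remv Q le X A (Suc k) e'" and k2: "2 \<le> k" and k3: "k + 2 \<le> m"
  shows "dg Q le e = dg Q le e'"
proof -
  interpret S: cpc Q le X C A kap by (rule sym)
  have h1: "1 \<le> m + 1 - k" "m + 1 - k \<le> card (C - A)" using mCA k2 k3 by simp_all
  obtain g where g: "remv Q le X C (m + 1 - k) g" using S.rem_ex[OF h1] by blast
  have h2: "1 \<le> m - k" "m - k \<le> card (C - A)" using mCA k2 k3 by simp_all
  obtain g' where g': "remv Q le X C (m - k) g'" using S.rem_ex[OF h2] by blast
  have rk: "remv Q le X A (Suc (k - 1)) e" using r1 k2 by simp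
  have gk: "remv Q le X C (m - (k - 1)) g" using g k2 k3 by (simp add: Suc_diff_le)
  have e1: "dg Q le e = dg Q le g" by (rule link[OF rk gk]) (use k2 k3 in auto)
  have e2: "dg Q le e' = dg Q le g'" by (rule link[OF r2 g']) (use k2 k3 in auto)
  have gS: "remv Q le X C (Suc (m - k)) g" using g k2 k3 by (simp add: Suc_diff_le)
  have m1: "dg Q le g' \<le> dg Q le g" by (rule S.rem_mono[OF g' gS]) (use k2 k3 mCA in auto)
  have m2: "dg Q le e \<le> dg Q le e'" by (rule rem_mono[OF r1 r2 k2 k3])
  show ?thesis using e1 e2 m1 m2 by simp
qed

lemma all_eq_aux:
  "2 \<le> s1 \<Longrightarrow> s1 + d + 1 \<le> m \<Longrightarrow> remv Q le X A s1 e1 \<Longrightarrow> remv Q le X A (s1 + d) e2 \<Longrightarrow> dg Q le e1 = dg Q le e2"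
proof (induction d arbitrary: e2)
  case 0
  then show ?case using rem_eq[of s1 e1 e2] by simp
next
  case (Suc d)
  obtain e3 where e3: "remv Q le X A (s1 + d) e3" using rem_ex[of "s1 + d"] Suc.prems by auto
  have "dg Q le e1 = dg Q le e3" using Suc.IH[OF Suc.prems(1) _ Suc.prems(3) e3] Suc.prems(2) by simp
  moreover have "dg Q le e3 = dg Q le e2"
    by (rule cons[OF e3]) (use Suc.prems in auto)
  ultimately show ?case by simp
qed

lemma all_eq:
  assumes "2 \<le> s1" "2 \<le> s2" "s1 + 1 \<le> m" "s2 + 1 \<le> m" "remv Q le X A s1 e1" "remv Q le X A s2 e2"
  shows "dg Q le e1 = dg Q le e2"
proof (cases "s1 \<le> s2")
  case True
  then obtain d where d: "s2 = s1 + d" using le_Suc_ex by blast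
  show ?thesis using all_eq_aux[of s1 d e1 e2] assms d by simp
next
  case False
  then obtain d where d: "s1 = s2 + d" using le_Suc_ex[of s2 s1] by auto
  show ?thesis using all_eq_aux[of s2 d e2 e1] assms d by simp
qed

lemma nb_rem:
  assumes u: "u \<in> A" "u \<notin> C" and nb: "\<exists>y\<in>A - C. \<not> le u y" and nt: "\<exists>y\<in>A - C. \<not> le y u"
  shows "\<exists>s. 2 \<le> s \<and> s + 1 \<le> m \<and> remv Q le X A s u"
proof -
  obtain yb where yb: "yb \<in> A - C" "\<not> le u yb" using nb by blast
  obtain yt where yt: "yt \<in> A - C" "\<not> le yt u" using nt by blast
  have QA: "A \<subseteq> Q" using dA downset_sub by blast
  have uQ: "u \<in> Q" using u QA by blast
  define Dn where "Dn = {y \<in> A. le y u}"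
  define SU where "SU = {y \<in> A. le u y \<and> y \<noteq> u}"
  define L where "L = X \<union> Dn"
  define U where "U = A - SU"
  have XA: "X \<subseteq> A" using X_def by blast
  have dL: "downset Q le L"
  proof (rule downsetI)
    show "L \<subseteq> Q" unfolding L_def Dn_def using XA QA by blast
  next
    fix w v assume w: "w \<in> L" and v: "v \<in> Q" "le v w"
    show "v \<in> L"
    proof (cases "w \<in> X")
      case True then show ?thesis using downsetD[OF dX True v] unfolding L_def by blast
    next
      case False
      then have wD: "w \<in> A" "le w u" using w unfolding L_def Dn_def by blast+
      have "v \<in> A" using downsetD[OF dA wD(1) v] .
      moreover have "le v u" using po_trans[OF po v(1) _ uQ v(2) wD(2)] wD(1) QA by blast
      ultimately show ?thesis unfolding L_def Dn_def by blast
    qed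
  qed
  have dU: "downset Q le U"
  proof (rule downsetI)
    show "U \<subseteq> Q" unfolding U_def using QA by blast
  next
    fix w v assume w: "w \<in> U" and v: "v \<in> Q" "le v w"
    have wA: "w \<in> A" "w \<notin> SU" using w unfolding U_def by blast+
    have vA: "v \<in> A" using downsetD[OF dA wA(1) v] .
    have "v \<notin> SU"
    proof
      assume "v \<in> SU"
      then have uv: "le u v" "v \<noteq> u" unfolding SU_def by blast+
      have wQ: "w \<in> Q" using wA QA by blast
      have uw: "le u w" using po_trans[OF po uQ v(1) wQ uv(1) v(2)] .
      show False
      proof (cases "w = u")
        case True
        then have "v = u" using po_antisym[OF po v(1) uQ] v(2) uv(1) by simp
        then show False using uv by simp
      next
        case False
        then have "w \<in> SU" unfolding SU_def using wA(1) uw by blast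
        then show False using wA by blast
      qed
    qed
    then show "v \<in> U" unfolding U_def using vA by blast
  qed
  have LU: "L \<subseteq> U"
  proof
    fix y assume y: "y \<in> L"
    have yA: "y \<in> A" using y XA unfolding L_def Dn_def by blast
    have "y \<notin> SU"
    proof
      assume ys: "y \<in> SU"
      then have uy: "le u y" "y \<noteq> u" unfolding SU_def by blast+
      show False
      proof (cases "y \<in> X")
        case True
        then have "y \<in> C" using X_def by blast
        then have "u \<in> C" using downsetD[OF dC _ uQ uy(1)] by blast
        then show False using u by blast
      next
        case False
        then have "le y u" using y unfolding L_def Dn_def by blast
        then have "y = u" using po_antisym[OF po _ uQ] uy(1) yA QA by blast
        then show False using uy by simp
      qed
    qed
    then show "y \<in> U" unfolding U_def using yA by blast
  qed
  define a where "a = card (Dn - X)"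
  define b where "b = card SU"
  have fP: "finite (A - C)" using finA by simp
  have D1: "Dn - X \<subseteq> (A - C) - {yt}" unfolding Dn_def using X_def yt by blast
  have S1: "SU \<subseteq> (A - C) - {yb, u}"
  proof
    fix y assume y: "y \<in> SU"
    then have yA: "y \<in> A" and uy: "le u y" "y \<noteq> u" unfolding SU_def by blast+
    have "y \<notin> C"
    proof
      assume "y \<in> C" then have "u \<in> C" using downsetD[OF dC _ uQ uy(1)] by blast
      then show False using u by blast
    qed
    moreover have "y \<noteq> yb" using uy yb by blast
    ultimately show "y \<in> (A - C) - {yb, u}" using yA uy by blast
  qed
  have ybu: "yb \<noteq> u" using yb po_refl[OF po uQ] by blast
  have ca: "a \<le> m - 1"
  proof -
    have "a \<le> card ((A - C) - {yt})" unfolding a_def using card_mono[OF _ D1] fP by simp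
    also have "\<dots> = m - 1" using yt fP by simp
    finally show ?thesis .
  qed
  have cb: "b \<le> m - 2"
  proof -
    have "b \<le> card ((A - C) - {yb, u})" unfolding b_def using card_mono[OF _ S1] fP by simp
    also have "card ((A - C) - {yb, u}) = m - 2"
    proof -
      have "card ((A - C) - {yb, u}) = card ((A - C) - {yb} - {u})" by (simp add: Diff_insert2[symmetric] insert_commute)
      also have "\<dots> = card ((A - C) - {yb}) - 1" using u ybu fP by (simp add: card_Diff_singleton)
      also have "\<dots> = m - 2" using yb fP by simp
      finally show ?thesis .
    qed
    finally show ?thesis .
  qed
  have cab: "a + b \<le> m"
  proof -
    have disj: "(Dn - X) \<inter> SU = {}"
    proof (rule ccontr)
      assume "(Dn - X) \<inter> SU \<noteq> {}"
      then obtain y where y: "y \<in> Dn" "y \<in> SU" by blast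
      then have "le y u" "le u y" "y \<noteq> u" "y \<in> A" unfolding Dn_def SU_def by blast+
      then show False using po_antisym[OF po _ uQ] QA by blast
    qed
    have sub: "(Dn - X) \<union> SU \<subseteq> A - C" using D1 S1 by blast
    have f1: "finite (Dn - X)" "finite SU" using D1 S1 fP finite_subset by blast+
    have "a + b = card ((Dn - X) \<union> SU)" unfolding a_def b_def using card_Un_disjoint[OF f1 disj] by simp
    also have "\<dots> \<le> m" using card_mono[OF fP sub] .
    finally show ?thesis .
  qed
  define s where "s = max 2 a"
  have s2: "2 \<le> s" and s3: "s + 1 \<le> m" using ca m3 unfolding s_def by auto
  have sb: "s \<le> m - b" using ca cb cab m3 unfolding s_def by auto
  have cL: "card L \<le> card X + s"
  proof -
    have "L = X \<union> (Dn - X)" unfolding L_def by blast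
    then have "card L \<le> card X + card (Dn - X)" using card_Un_le by metis
    then show ?thesis unfolding a_def[symmetric] s_def by simp
  qed
  have cU: "card X + s \<le> card U"
  proof -
    have SA: "SU \<subseteq> A" unfolding SU_def by blast
    have fS: "finite SU" using SA finA finite_subset by blast
    have "card U = card A - b" unfolding U_def b_def using card_Diff_subset[OF fS SA] .
    then show ?thesis using cardA sb cb m3 by simp
  qed
  obtain W where W: "downset Q le W" "L \<subseteq> W" "W \<subseteq> U" "card W = card X + s"
    using downset_between[OF po fin dL dU LU cL cU] by blast
  have pW: "pdown Q le X A s W" unfolding pdown_def using W unfolding L_def U_def by blast
  have uW: "u \<in> W" using W(2) po_refl[OF po uQ] u unfolding L_def Dn_def by blast
  have uX: "u \<notin> X" using u X_def by blast
  have dW: "downset Q le (W - {u})"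
  proof (rule downsetI)
    show "W - {u} \<subseteq> Q" using W(1) downset_sub by blast
  next
    fix w v assume w: "w \<in> W - {u}" and v: "v \<in> Q" "le v w"
    have vW: "v \<in> W" using downsetD[OF W(1) _ v] w by blast
    have "v \<noteq> u"
    proof
      assume vu: "v = u"
      have wA: "w \<in> A" using w W(3) unfolding U_def by blast
      then have "w \<in> SU" unfolding SU_def using w v vu by blast
      then show False using w W(3) unfolding U_def by blast
    qed
    then show "v \<in> W - {u}" using vW by blast
  qed
  have "remv Q le X A s u" unfolding remv_def using pW uW uX dW by blast
  then show ?thesis using s2 s3 by blast
qed

lemma final:
  assumes u1: "u1 \<in> A - C" and u2: "u2 \<in> A - C"
    and b1: "\<exists>y\<in>A - C. \<not> le u1 y" and t1: "\<exists>y\<in>A - C. \<not> le y u1"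
    and b2: "\<exists>y\<in>A - C. \<not> le u2 y" and t2: "\<exists>y\<in>A - C. \<not> le y u2"
    and le12: "le u1 u2"
  shows "u1 = u2"
proof (rule ccontr)
  assume ne: "u1 \<noteq> u2"
  obtain s1 where s1: "2 \<le> s1" "s1 + 1 \<le> m" "remv Q le X A s1 u1" using nb_rem[OF _ _ b1 t1] u1 by blast
  obtain s2 where s2: "2 \<le> s2" "s2 + 1 \<le> m" "remv Q le X A s2 u2" using nb_rem[OF _ _ b2 t2] u2 by blast
  have "dg Q le u1 = dg Q le u2" using all_eq[OF s1(1) s2(1) s1(2) s2(2) s1(3) s2(3)] .
  moreover have "u1 \<in> Q" "u2 \<in> Q" using u1 u2 dA downset_sub by blast+
  ultimately show False using dg_strict[OF po fin _ _ le12 ne] by simp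
qed

end

lemma awe_from:
  assumes po: "partial_order_on' Q le" and PQ: "P \<subseteq> Q" and fP: "finite P"
    and H: "\<forall>u1\<in>P. \<forall>u2\<in>P. (\<exists>y\<in>P. \<not> le u1 y) \<longrightarrow> (\<exists>y\<in>P. \<not> le y u1) \<longrightarrow>
              (\<exists>y\<in>P. \<not> le u2 y) \<longrightarrow> (\<exists>y\<in>P. \<not> le y u2) \<longrightarrow> le u1 u2 \<longrightarrow> u1 = u2"
  shows "antichain_with_ends le P"
proof -
  define Bot where "Bot = {b\<in>P. \<forall>y\<in>P. le b y}"
  define Top where "Top = {t\<in>P. \<forall>y\<in>P. le y t} - Bot"
  define U where "U = P - Bot - Top"
  have fB: "finite Bot" and fT: "finite Top" using fP unfolding Bot_def Top_def by simp_all
  have cB: "card Bot \<le> 1"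
  proof -
    have "\<forall>a1\<in>Bot. \<forall>a2\<in>Bot. a1 = a2"
    proof (intro ballI)
      fix a1 a2 assume a: "a1 \<in> Bot" "a2 \<in> Bot"
      then have "le a1 a2" "le a2 a1" "a1 \<in> Q" "a2 \<in> Q" unfolding Bot_def using PQ by blast+
      then show "a1 = a2" using po_antisym[OF po] by blast
    qed
    then show ?thesis using card_le_Suc0_iff_eq[OF fB] by simp
  qed
  have cT: "card Top \<le> 1"
  proof -
    have "\<forall>a1\<in>Top. \<forall>a2\<in>Top. a1 = a2"
    proof (intro ballI)
      fix a1 a2 assume a: "a1 \<in> Top" "a2 \<in> Top"
      then have "le a1 a2" "le a2 a1" "a1 \<in> Q" "a2 \<in> Q" unfolding Top_def using PQ by blast+
      then show "a1 = a2" using po_antisym[OF po] by blast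
    qed
    then show ?thesis using card_le_Suc0_iff_eq[OF fT] by simp
  qed
  have nbt: "(\<exists>y\<in>P. \<not> le u y) \<and> (\<exists>y\<in>P. \<not> le y u)" if "u \<in> U" for u
    using that unfolding U_def Top_def Bot_def by blast
  have anti: "\<forall>x\<in>U. \<forall>y\<in>U. x \<noteq> y \<longrightarrow> incomparable le x y"
  proof (intro ballI impI)
    fix x y assume xy: "x \<in> U" "y \<in> U" "x \<noteq> y"
    have xP: "x \<in> P" "y \<in> P" using xy unfolding U_def by blast+
    have "\<not> le x y" using H xP nbt[OF xy(1)] nbt[OF xy(2)] xy(3) by blast
    moreover have "\<not> le y x" using H xP nbt[OF xy(1)] nbt[OF xy(2)] xy(3) by blast
    ultimately show "incomparable le x y" unfolding incomparable_def by blast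
  qed
  have bu: "\<forall>b\<in>Bot. \<forall>u\<in>U. lt_of le b u"
    unfolding lt_of_def U_def Bot_def by blast
  have tu: "\<forall>t\<in>Top. \<forall>u\<in>U. lt_of le u t"
    unfolding lt_of_def U_def Top_def by blast
  have "P = U \<union> Bot \<union> Top" unfolding U_def Top_def Bot_def by blast
  moreover have "U \<inter> Bot = {}" "U \<inter> Top = {}" "Bot \<inter> Top = {}" unfolding U_def Top_def by blast+
  ultimately show ?thesis unfolding antichain_with_ends_def
    using fB fT cB cT anti bu tu by blast
qed

lemma small_H:
  assumes po: "partial_order_on' Q le" and PQ: "P \<subseteq> Q" and fP: "finite P" and c: "card P \<le> 2"
  shows "\<forall>u1\<in>P. \<forall>u2\<in>P. (\<exists>y\<in>P. \<not> le u1 y) \<longrightarrow> (\<exists>y\<in>P. \<not> le y u1) \<longrightarrow>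
              (\<exists>y\<in>P. \<not> le u2 y) \<longrightarrow> (\<exists>y\<in>P. \<not> le y u2) \<longrightarrow> le u1 u2 \<longrightarrow> u1 = u2"
proof (intro ballI impI)
  fix u1 u2 assume u: "u1 \<in> P" "u2 \<in> P" and b1: "\<exists>y\<in>P. \<not> le u1 y" and le12: "le u1 u2"
  show "u1 = u2"
  proof (rule ccontr)
    assume ne: "u1 \<noteq> u2"
    have sub: "{u1, u2} \<subseteq> P" using u by blast
    have "card {u1, u2} = 2" using ne by simp
    then have "{u1, u2} = P" using card_subset_eq[OF fP sub] c card_mono[OF fP sub] by simp
    then obtain y where y: "y \<in> {u1, u2}" "\<not> le u1 y" using b1 by blast
    have "le u1 u1" using po_refl[OF po] u PQ by blast
    then show False using y le12 by blast
  qed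
qed

theorem mainTheorem17:
  fixes Q :: "'a set" and le :: "'a \<Rightarrow> 'a \<Rightarrow> bool" and n :: nat
    and SA SB SC :: "'b set" and rA rB rC :: "'b \<Rightarrow> 'b \<Rightarrow> bool"
    and vs :: "'a set list"
  assumes posQ: "partial_order_on' Q le"
    and posA: "partial_order_on' SA rA" and finA: "finite SA" and cardA: "card SA = n"
    and posB: "partial_order_on' SB rB" and finB: "finite SB" and cardB: "card SB = n"
    and posC: "partial_order_on' SC rC" and finC: "finite SC" and cardC: "card SC = n"
    and nAB: "\<not> poset_iso SA rA SB rB" and nAC: "\<not> poset_iso SA rA SC rC"
    and nBC: "\<not> poset_iso SB rB SC rC"
    and wit: "witness Q le n {(SA, rA), (SB, rB), (SC, rC)}"
    and spec: "special_path Q le n {(SA, rA), (SB, rB), (SC, rC)} vs"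
    and minimal: "\<forall>ws. special_path Q le n {(SA, rA), (SB, rB), (SC, rC)} ws
                      \<longrightarrow> length vs \<le> length ws"
    and isoA: "poset_iso (hd vs) le SA rA"
    and isoB: "\<forall>i. 0 < i \<and> i < length vs - 1 \<longrightarrow> poset_iso (vs ! i) le SB rB"
    and isoC: "poset_iso (last vs) le SC rC"
    and Qunion: "Q = \<Union> (set vs)"
  shows "let X = hd vs \<inter> last vs in
           (antichain_with_ends le (hd vs - X) \<or> chain2_plus_point le (hd vs - X)) \<and>
           (antichain_with_ends le (last vs - X) \<or> chain2_plus_point le (last vs - X))"
proof -
  have allnd: "\<forall>v\<in>set vs. ndownset Q le n v" using spec unfolding special_path_def exch_path_def by blast
  have finQ: "finite Q"
  proof -
    have "finite (set vs)" by simp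
    moreover have "\<forall>v\<in>set vs. finite v" using allnd unfolding ndownset_def by blast
    ultimately show ?thesis using Qunion by simp
  qed
  interpret M: msp Q le n SA SB SC rA rB rC "{(SA, rA), (SB, rB), (SC, rC)}" vs
    by (unfold_locales) (use posQ nAB nAC nBC wit spec minimal isoA isoB isoC finQ in auto)
  have ndA: "ndownset Q le n (hd vs)" and ndC: "ndownset Q le n (last vs)" using M.nd_hd M.nd_last by simp_all
  have dA: "downset Q le (hd vs)" and dC: "downset Q le (last vs)" using ndA ndC nd_down by blast+
  have fA: "finite (hd vs)" and fC: "finite (last vs)" using ndA ndC nd_finite by blast+
  have QA: "hd vs \<subseteq> Q" and QC: "last vs \<subseteq> Q" using dA dC downset_sub by blast+
  have e1: "hd vs - hd vs \<inter> last vs = hd vs - last vs" by blast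
  have e2: "last vs - hd vs \<inter> last vs = last vs - hd vs" by blast
  have key: "antichain_with_ends le (hd vs - last vs) \<and> antichain_with_ends le (last vs - hd vs)"
  proof (cases "3 \<le> card (hd vs - last vs)")
    case True
    have kap: "(\<Sum>z\<in>Z. dg Q le z) = cp SB rB"
      if "downset Q le Z" "hd vs \<inter> last vs \<subseteq> Z" "Z \<subseteq> hd vs \<union> last vs" "card Z = card (hd vs)"
         "Z \<noteq> hd vs" "Z \<noteq> last vs" for Z
    proof -
      have "finite Z" using that(3) fA fC finite_subset by blast
      then have "ndownset Q le n Z" unfolding ndownset_def using that(1,4) nd_card[OF ndA] by simp
      then have "IMf Q le n (hd vs) (last vs) Z" unfolding IMf_def using that by blast
      then show ?thesis by (rule M.all_cp[OF True])
    qed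
    interpret K: cpc Q le "hd vs \<inter> last vs" "hd vs" "last vs" "cp SB rB"
    proof (unfold_locales)
      show "partial_order_on' Q le" by (rule posQ)
      show "finite Q" by (rule finQ)
      show "downset Q le (hd vs)" by (rule dA)
      show "downset Q le (last vs)" by (rule dC)
      show "hd vs \<inter> last vs = hd vs \<inter> last vs" by simp
      show "card (hd vs) = card (last vs)" using nd_card[OF ndA] nd_card[OF ndC] by simp
      show "3 \<le> card (hd vs - last vs)" by (rule True)
      fix Z assume "downset Q le Z" "hd vs \<inter> last vs \<subseteq> Z" "Z \<subseteq> hd vs \<union> last vs" "card Z = card (hd vs)"
         "Z \<noteq> hd vs" "Z \<noteq> last vs"
      then show "(\<Sum>z\<in>Z. dg Q le z) = cp SB rB" by (rule kap)
    qed
    interpret K2: cpc Q le "hd vs \<inter> last vs" "last vs" "hd vs" "cp SB rB" by (rule K.sym)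
    have H1: "\<forall>u1\<in>hd vs - last vs. \<forall>u2\<in>hd vs - last vs. (\<exists>y\<in>hd vs - last vs. \<not> le u1 y) \<longrightarrow>
        (\<exists>y\<in>hd vs - last vs. \<not> le y u1) \<longrightarrow> (\<exists>y\<in>hd vs - last vs. \<not> le u2 y) \<longrightarrow>
        (\<exists>y\<in>hd vs - last vs. \<not> le y u2) \<longrightarrow> le u1 u2 \<longrightarrow> u1 = u2"
      using K.final by blast
    have H2: "\<forall>u1\<in>last vs - hd vs. \<forall>u2\<in>last vs - hd vs. (\<exists>y\<in>last vs - hd vs. \<not> le u1 y) \<longrightarrow>
        (\<exists>y\<in>last vs - hd vs. \<not> le y u1) \<longrightarrow> (\<exists>y\<in>last vs - hd vs. \<not> le u2 y) \<longrightarrow>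
        (\<exists>y\<in>last vs - hd vs. \<not> le y u2) \<longrightarrow> le u1 u2 \<longrightarrow> u1 = u2"
      using K2.final by blast
    have "antichain_with_ends le (hd vs - last vs)"
      by (rule awe_from[OF posQ _ _ H1]) (use QA fA in auto)
    moreover have "antichain_with_ends le (last vs - hd vs)"
      by (rule awe_from[OF posQ _ _ H2]) (use QC fC in auto)
    ultimately show ?thesis by blast
  next
    case False
    then have c1: "card (hd vs - last vs) \<le> 2" by simp
    have c2: "card (last vs - hd vs) \<le> 2" using c1 M.card_AC by simp
    have "antichain_with_ends le (hd vs - last vs)"
      by (rule awe_from[OF posQ _ _ small_H[OF posQ _ _ c1]]) (use QA fA in auto)
    moreover have "antichain_with_ends le (last vs - hd vs)"
      by (rule awe_from[OF posQ _ _ small_H[OF posQ _ _ c2]]) (use QC fC in auto)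
    ultimately show ?thesis by blast
  qed
  then show ?thesis unfolding Let_def e1 e2 by blast
qed

end
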